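(* Let $P:\mathcal X\to\mathcal B$ be a fibration with fibered pullbacks, let $(p,P)$ and $(q,P)$ be pointed fibrations, and let $\alpha:p\Rightarrow q$ be a natural transformation with $P$-vertical components. Then: (i) for every object $(I,x:X\to qI)$ of the total category of $P/q$, taking the pullback of $x$ along $\alpha_I:pI\to qI$, giving $x':X'\to pI$, defines an assignment $(I,x)\mapsto(I,x':X'\to pI)$ which extends to a fibered functor $\alpha^*:P/q\to_{\mathcal B}P/p$; (ii) the assignment $(I,x:X\to pI)\mapsto(I,\alpha_I\circ x:X\to qI)$ on objects of the total category of $P/p$ (and $(u,f)\mapsto(u,f)$ on morphisms) extends to a fibered functor $\Sigma_\alpha:P/p\to_{\mathcal B}P/q$; (iii) there is a fibered adjunction $\Sigma_\alpha\dashv\alpha^*$ between $P/p$ and $P/q$ in $\mathbf{Fib}(\mathcal B)$.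
   Context: For $P:\mathcal X\to\mathcal B$: $f:X\to Y$ is $P$-cartesian if for every $v:K\to PX$ and $g:Z\to Y$ with $Pg=Pf\circ v$ there is a unique $h:Z\to X$ with $fh=g$, $Ph=v$; $P$ is a fibration if every $Y$ and $u:I\to PY$ admit a cartesian $f$ with $Pf=u$; $f$ is $P$-vertical if $Pf$ is an identity; the fiber $P_I$ consists of morphisms over $1_I$. $P$ has fibered pullbacks if each fiber has pullbacks stable under reindexing. Fibered functors between fibrations over $\mathcal B$ commute with projections and preserve cartesian morphisms; a fibered adjunction is an adjunction between fibered functors with vertical unit and counit; $\mathbf{Fib}(\mathcal B)$ is the 2-category of fibrations over $\mathcal B$, fibered functors and vertical natural transformations. A pointed fibration $(p,P)$ is a fibration with a functor $p:\mathcal B\to\mathcal X$, $Pp=1_{\mathcal B}$, sending every morphism to a $P$-cartesian morphism. The slice fibration $P/p:\mathcal Y\to\mathcal B$: objects of $\mathcal Y$ are pairs $(I,x:X\to pI)$ with $x$ $P$-vertical over $I$; morphisms $(I,x)\to(J,y)$ are pairs $(u,f)$ with $u:I\to J$ in $\mathcal B$, $f:X\to Y$ in $\mathcal X$, $y\circ f=pu\circ x$; $P/p$ is the first projection (it is the change of base of the codomain fibration $\mathbf{cod}_P:V(P)\to\mathcal X$, on $P$-vertical arrows, along $p$). Its cartesian morphisms are those $(u,f)$ whose square $y f=pu\, x$ is a pullback in $\mathcal X$. The pullback in (i) is taken in the fiber $P_I$. *)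

theory Defs
  imports Main
begin

text \<open>A category: objects, arrows, domain, codomain, identities, composition.
  Cp C g f denotes the composite g o f.\<close>

record ('o, 'm) cat =
  Ob :: "'o set"
  Ar :: "'m set"
  Dm :: "'m \<Rightarrow> 'o"
  Cd :: "'m \<Rightarrow> 'o"
  Idt :: "'o \<Rightarrow> 'm"
  Cp :: "'m \<Rightarrow> 'm \<Rightarrow> 'm"

definition hom :: "('o, 'm) cat \<Rightarrow> 'o \<Rightarrow> 'o \<Rightarrow> 'm set" where
  "hom C a b = {f \<in> Ar C. Dm C f = a \<and> Cd C f = b}"

definition is_category :: "('o, 'm) cat \<Rightarrow> bool" where
  "is_category C \<longleftrightarrow>
     (\<forall>f\<in>Ar C. Dm C f \<in> Ob C \<and> Cd C f \<in> Ob C) \<and>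
     (\<forall>a\<in>Ob C. Idt C a \<in> hom C a a) \<and>
     (\<forall>f\<in>Ar C. \<forall>g\<in>Ar C. Cd C f = Dm C g \<longrightarrow> Cp C g f \<in> hom C (Dm C f) (Cd C g)) \<and>
     (\<forall>f\<in>Ar C. Cp C (Idt C (Cd C f)) f = f \<and> Cp C f (Idt C (Dm C f)) = f) \<and>
     (\<forall>f\<in>Ar C. \<forall>g\<in>Ar C. \<forall>h\<in>Ar C. Cd C f = Dm C g \<and> Cd C g = Dm C h \<longrightarrow>
         Cp C h (Cp C g f) = Cp C (Cp C h g) f)"

definition is_functor :: "('o1, 'm1) cat \<Rightarrow> ('o2, 'm2) cat \<Rightarrow> ('o1 \<Rightarrow> 'o2) \<Rightarrow> ('m1 \<Rightarrow> 'm2) \<Rightarrow> bool" where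
  "is_functor C D Fo Fa \<longleftrightarrow> is_category C \<and> is_category D \<and>
     (\<forall>a\<in>Ob C. Fo a \<in> Ob D) \<and>
     (\<forall>f\<in>Ar C. Fa f \<in> hom D (Fo (Dm C f)) (Fo (Cd C f))) \<and>
     (\<forall>a\<in>Ob C. Fa (Idt C a) = Idt D (Fo a)) \<and>
     (\<forall>f\<in>Ar C. \<forall>g\<in>Ar C. Cd C f = Dm C g \<longrightarrow> Fa (Cp C g f) = Cp D (Fa g) (Fa f))"

definition is_pullback :: "('o, 'm) cat \<Rightarrow> 'm \<Rightarrow> 'm \<Rightarrow> 'm \<Rightarrow> 'm \<Rightarrow> bool" where
  "is_pullback C a b pa pb \<longleftrightarrow>
     a \<in> Ar C \<and> b \<in> Ar C \<and> pa \<in> Ar C \<and> pb \<in> Ar C \<and>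
     Cd C a = Cd C b \<and> Cd C pa = Dm C a \<and> Cd C pb = Dm C b \<and> Dm C pa = Dm C pb \<and>
     Cp C a pa = Cp C b pb \<and>
     (\<forall>h\<in>Ar C. \<forall>k\<in>Ar C. Dm C h = Dm C k \<and> Cd C h = Dm C a \<and> Cd C k = Dm C b \<and>
        Cp C a h = Cp C b k \<longrightarrow>
        (\<exists>!m. m \<in> Ar C \<and> Dm C m = Dm C h \<and> Cd C m = Dm C pa \<and>
               Cp C pa m = h \<and> Cp C pb m = k))"

definition has_pullbacks :: "('o, 'm) cat \<Rightarrow> bool" where
  "has_pullbacks C \<longleftrightarrow>
     (\<forall>a\<in>Ar C. \<forall>b\<in>Ar C. Cd C a = Cd C b \<longrightarrow> (\<exists>pa pb. is_pullback C a b pa pb))"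

definition cartesian :: "('x, 'f) cat \<Rightarrow> ('i, 'u) cat \<Rightarrow> ('x \<Rightarrow> 'i) \<Rightarrow> ('f \<Rightarrow> 'u) \<Rightarrow> 'f \<Rightarrow> bool" where
  "cartesian X B Po Pa f \<longleftrightarrow> f \<in> Ar X \<and>
     (\<forall>v\<in>Ar B. \<forall>g\<in>Ar X.
        Cd X g = Cd X f \<and> Cd B v = Po (Dm X f) \<and> Pa g = Cp B (Pa f) v \<longrightarrow>
        (\<exists>!h. h \<in> Ar X \<and> Dm X h = Dm X g \<and> Cd X h = Dm X f \<and> Cp X f h = g \<and> Pa h = v))"

definition is_fibration :: "('x, 'f) cat \<Rightarrow> ('i, 'u) cat \<Rightarrow> ('x \<Rightarrow> 'i) \<Rightarrow> ('f \<Rightarrow> 'u) \<Rightarrow> bool" where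
  "is_fibration X B Po Pa \<longleftrightarrow> is_functor X B Po Pa \<and>
     (\<forall>Y\<in>Ob X. \<forall>u\<in>Ar B. Cd B u = Po Y \<longrightarrow>
        (\<exists>f. Cd X f = Y \<and> Pa f = u \<and> cartesian X B Po Pa f))"

definition fiber :: "('x, 'f) cat \<Rightarrow> ('i, 'u) cat \<Rightarrow> ('x \<Rightarrow> 'i) \<Rightarrow> ('f \<Rightarrow> 'u) \<Rightarrow> 'i \<Rightarrow> ('x, 'f) cat" where
  "fiber X B Po Pa I =
     \<lparr>Ob = {a \<in> Ob X. Po a = I}, Ar = {f \<in> Ar X. Pa f = Idt B I},
      Dm = Dm X, Cd = Cd X, Idt = Idt X, Cp = Cp X\<rparr>"

text \<open>Fibered pullbacks: each fiber has pullbacks, and reindexing along any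
  u : I -> J (via cartesian lifts over u of the four corners and the induced
  vertical maps) sends pullback squares in P_J to pullback squares in P_I.\<close>

definition fibered_pullbacks :: "('x, 'f) cat \<Rightarrow> ('i, 'u) cat \<Rightarrow> ('x \<Rightarrow> 'i) \<Rightarrow> ('f \<Rightarrow> 'u) \<Rightarrow> bool" where
  "fibered_pullbacks X B Po Pa \<longleftrightarrow>
     (\<forall>I\<in>Ob B. has_pullbacks (fiber X B Po Pa I)) \<and>
     (\<forall>u\<in>Ar B. \<forall>a b pa pb cA cB cC cD a' b' pa' pb'.
        is_pullback (fiber X B Po Pa (Cd B u)) a b pa pb \<and>
        cartesian X B Po Pa cA \<and> Pa cA = u \<and> Cd X cA = Dm X a \<and>
        cartesian X B Po Pa cB \<and> Pa cB = u \<and> Cd X cB = Dm X b \<and>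
        cartesian X B Po Pa cC \<and> Pa cC = u \<and> Cd X cC = Cd X a \<and>
        cartesian X B Po Pa cD \<and> Pa cD = u \<and> Cd X cD = Dm X pa \<and>
        a' \<in> Ar (fiber X B Po Pa (Dm B u)) \<and> Dm X a' = Dm X cA \<and> Cd X a' = Dm X cC \<and>
          Cp X cC a' = Cp X a cA \<and>
        b' \<in> Ar (fiber X B Po Pa (Dm B u)) \<and> Dm X b' = Dm X cB \<and> Cd X b' = Dm X cC \<and>
          Cp X cC b' = Cp X b cB \<and>
        pa' \<in> Ar (fiber X B Po Pa (Dm B u)) \<and> Dm X pa' = Dm X cD \<and> Cd X pa' = Dm X cA \<and>
          Cp X cA pa' = Cp X pa cD \<and>
        pb' \<in> Ar (fiber X B Po Pa (Dm B u)) \<and> Dm X pb' = Dm X cD \<and> Cd X pb' = Dm X cB \<and>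
          Cp X cB pb' = Cp X pb cD
        \<longrightarrow> is_pullback (fiber X B Po Pa (Dm B u)) a' b' pa' pb')"

definition is_pointed :: "('x, 'f) cat \<Rightarrow> ('i, 'u) cat \<Rightarrow> ('x \<Rightarrow> 'i) \<Rightarrow> ('f \<Rightarrow> 'u)
    \<Rightarrow> ('i \<Rightarrow> 'x) \<Rightarrow> ('u \<Rightarrow> 'f) \<Rightarrow> bool" where
  "is_pointed X B Po Pa po pa \<longleftrightarrow> is_fibration X B Po Pa \<and> is_functor B X po pa \<and>
     (\<forall>I\<in>Ob B. Po (po I) = I) \<and>
     (\<forall>u\<in>Ar B. Pa (pa u) = u \<and> cartesian X B Po Pa (pa u))"

definition vertical_nat_trans :: "('x, 'f) cat \<Rightarrow> ('i, 'u) cat \<Rightarrow> ('x \<Rightarrow> 'i) \<Rightarrow> ('f \<Rightarrow> 'u)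
    \<Rightarrow> ('i \<Rightarrow> 'x) \<Rightarrow> ('u \<Rightarrow> 'f) \<Rightarrow> ('i \<Rightarrow> 'x) \<Rightarrow> ('u \<Rightarrow> 'f) \<Rightarrow> ('i \<Rightarrow> 'f) \<Rightarrow> bool" where
  "vertical_nat_trans X B Po Pa po pa qo qa \<alpha> \<longleftrightarrow>
     (\<forall>I\<in>Ob B. \<alpha> I \<in> hom X (po I) (qo I) \<and> Pa (\<alpha> I) = Idt B I) \<and>
     (\<forall>u\<in>Ar B. Cp X (qa u) (\<alpha> (Dm B u)) = Cp X (\<alpha> (Cd B u)) (pa u))"

text \<open>Morphisms (I,x) -> (J,y): pairs (u,f) with y o f = pu o x; a morphism is stored
  together with its source and target as (source, (u,f), target).\<close>

definition slice :: "('x, 'f) cat \<Rightarrow> ('i, 'u) cat \<Rightarrow> ('x \<Rightarrow> 'i) \<Rightarrow> ('f \<Rightarrow> 'u)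
    \<Rightarrow> ('i \<Rightarrow> 'x) \<Rightarrow> ('u \<Rightarrow> 'f)
    \<Rightarrow> ('i \<times> 'f, ('i \<times> 'f) \<times> ('u \<times> 'f) \<times> ('i \<times> 'f)) cat" where
  "slice X B Po Pa po pa =
    (let Obs = {(I, x). I \<in> Ob B \<and> x \<in> Ar X \<and> Cd X x = po I \<and> Pa x = Idt B I} in
     \<lparr>Ob = Obs,
      Ar = {(s, (u, f), t). s \<in> Obs \<and> t \<in> Obs \<and> u \<in> hom B (fst s) (fst t) \<and>
                f \<in> hom X (Dm X (snd s)) (Dm X (snd t)) \<and>
                Cp X (snd t) f = Cp X (pa u) (snd s)},
      Dm = (\<lambda>m. fst m),
      Cd = (\<lambda>m. snd (snd m)),
      Idt = (\<lambda>s. (s, (Idt B (fst s), Idt X (Dm X (snd s))), s)),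
      Cp = (\<lambda>g f. (fst f, (Cp B (fst (fst (snd g))) (fst (fst (snd f))),
                           Cp X (snd (fst (snd g))) (snd (fst (snd f)))), snd (snd g)))\<rparr>)"

definition slice_proj_o :: "'i \<times> 'f \<Rightarrow> 'i" where
  "slice_proj_o s = fst s"

definition slice_proj_a :: "('i \<times> 'f) \<times> ('u \<times> 'f) \<times> ('i \<times> 'f) \<Rightarrow> 'u" where
  "slice_proj_a m = fst (fst (snd m))"

definition fibered_functor :: "('i, 'u) cat
    \<Rightarrow> ('a, 'b) cat \<Rightarrow> ('a \<Rightarrow> 'i) \<Rightarrow> ('b \<Rightarrow> 'u)
    \<Rightarrow> ('c, 'd) cat \<Rightarrow> ('c \<Rightarrow> 'i) \<Rightarrow> ('d \<Rightarrow> 'u)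
    \<Rightarrow> ('a \<Rightarrow> 'c) \<Rightarrow> ('b \<Rightarrow> 'd) \<Rightarrow> bool" where
  "fibered_functor B Y1 Q1o Q1a Y2 Q2o Q2a Fo Fa \<longleftrightarrow>
     is_fibration Y1 B Q1o Q1a \<and> is_fibration Y2 B Q2o Q2a \<and>
     is_functor Y1 Y2 Fo Fa \<and>
     (\<forall>a\<in>Ob Y1. Q2o (Fo a) = Q1o a) \<and>
     (\<forall>m\<in>Ar Y1. Q2a (Fa m) = Q1a m) \<and>
     (\<forall>m\<in>Ar Y1. cartesian Y1 B Q1o Q1a m \<longrightarrow> cartesian Y2 B Q2o Q2a (Fa m))"

definition fibered_adjunction :: "('i, 'u) cat
    \<Rightarrow> ('a, 'b) cat \<Rightarrow> ('a \<Rightarrow> 'i) \<Rightarrow> ('b \<Rightarrow> 'u)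
    \<Rightarrow> ('c, 'd) cat \<Rightarrow> ('c \<Rightarrow> 'i) \<Rightarrow> ('d \<Rightarrow> 'u)
    \<Rightarrow> ('a \<Rightarrow> 'c) \<Rightarrow> ('b \<Rightarrow> 'd) \<Rightarrow> ('c \<Rightarrow> 'a) \<Rightarrow> ('d \<Rightarrow> 'b) \<Rightarrow> bool" where
  "fibered_adjunction B Y1 Q1o Q1a Y2 Q2o Q2a Go Ga Fo Fa \<longleftrightarrow>
     fibered_functor B Y1 Q1o Q1a Y2 Q2o Q2a Go Ga \<and>
     fibered_functor B Y2 Q2o Q2a Y1 Q1o Q1a Fo Fa \<and>
     (\<exists>\<eta> \<epsilon>.
        (\<forall>a\<in>Ob Y1. \<eta> a \<in> hom Y1 a (Fo (Go a)) \<and> Q1a (\<eta> a) = Idt B (Q1o a)) \<and>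
        (\<forall>m\<in>Ar Y1. Cp Y1 (Fa (Ga m)) (\<eta> (Dm Y1 m)) = Cp Y1 (\<eta> (Cd Y1 m)) m) \<and>
        (\<forall>b\<in>Ob Y2. \<epsilon> b \<in> hom Y2 (Go (Fo b)) b \<and> Q2a (\<epsilon> b) = Idt B (Q2o b)) \<and>
        (\<forall>m\<in>Ar Y2. Cp Y2 m (\<epsilon> (Dm Y2 m)) = Cp Y2 (\<epsilon> (Cd Y2 m)) (Ga (Fa m))) \<and>
        (\<forall>a\<in>Ob Y1. Cp Y2 (\<epsilon> (Go a)) (Ga (\<eta> a)) = Idt Y2 (Go a)) \<and>
        (\<forall>b\<in>Ob Y2. Cp Y1 (Fa (\<epsilon> b)) (\<eta> (Fo b)) = Idt Y1 (Fo b)))"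

definition sigma_o :: "('x, 'f) cat \<Rightarrow> ('i \<Rightarrow> 'f) \<Rightarrow> 'i \<times> 'f \<Rightarrow> 'i \<times> 'f" where
  "sigma_o X \<alpha> s = (fst s, Cp X (\<alpha> (fst s)) (snd s))"

definition sigma_a :: "('x, 'f) cat \<Rightarrow> ('i \<Rightarrow> 'f)
    \<Rightarrow> ('i \<times> 'f) \<times> ('u \<times> 'f) \<times> ('i \<times> 'f) \<Rightarrow> ('i \<times> 'f) \<times> ('u \<times> 'f) \<times> ('i \<times> 'f)" where
  "sigma_a X \<alpha> m = (sigma_o X \<alpha> (fst m), fst (snd m), sigma_o X \<alpha> (snd (snd m)))"

end

theory Submission
  imports Defs
begin


locale category =
  fixes C :: "('o, 'm) cat"
  assumes is_cat: "is_category C"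
begin

lemma Dm_Ob[simp]: "f \<in> Ar C \<Longrightarrow> Dm C f \<in> Ob C"
  using is_cat unfolding is_category_def by blast
lemma Cd_Ob[simp]: "f \<in> Ar C \<Longrightarrow> Cd C f \<in> Ob C"
  using is_cat unfolding is_category_def by blast
lemma Idt_Ar[simp]: "a \<in> Ob C \<Longrightarrow> Idt C a \<in> Ar C"
  using is_cat unfolding is_category_def hom_def by blast
lemma Dm_Idt[simp]: "a \<in> Ob C \<Longrightarrow> Dm C (Idt C a) = a"
  using is_cat unfolding is_category_def hom_def by blast
lemma Cd_Idt[simp]: "a \<in> Ob C \<Longrightarrow> Cd C (Idt C a) = a"
  using is_cat unfolding is_category_def hom_def by blast
lemma Cp_Ar[simp]: "f \<in> Ar C \<Longrightarrow> g \<in> Ar C \<Longrightarrow> Cd C f = Dm C g \<Longrightarrow> Cp C g f \<in> Ar C"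
  using is_cat unfolding is_category_def hom_def by blast
lemma Dm_Cp[simp]: "f \<in> Ar C \<Longrightarrow> g \<in> Ar C \<Longrightarrow> Cd C f = Dm C g \<Longrightarrow> Dm C (Cp C g f) = Dm C f"
  using is_cat unfolding is_category_def hom_def by blast
lemma Cd_Cp[simp]: "f \<in> Ar C \<Longrightarrow> g \<in> Ar C \<Longrightarrow> Cd C f = Dm C g \<Longrightarrow> Cd C (Cp C g f) = Cd C g"
  using is_cat unfolding is_category_def hom_def by blast
lemma Idt_left[simp]: "f \<in> Ar C \<Longrightarrow> Cd C f = b \<Longrightarrow> Cp C (Idt C b) f = f"
  using is_cat unfolding is_category_def by blast
lemma Idt_right[simp]: "f \<in> Ar C \<Longrightarrow> Dm C f = a \<Longrightarrow> Cp C f (Idt C a) = f"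
  using is_cat unfolding is_category_def by blast
lemma assoc: "f \<in> Ar C \<Longrightarrow> g \<in> Ar C \<Longrightarrow> h \<in> Ar C \<Longrightarrow> Cd C f = Dm C g \<Longrightarrow> Cd C g = Dm C h \<Longrightarrow>
   Cp C h (Cp C g f) = Cp C (Cp C h g) f"
  using is_cat unfolding is_category_def by blast

end

locale fibctx =
  fixes X :: "('x, 'f) cat" and B :: "('i, 'u) cat" and Po :: "'x \<Rightarrow> 'i" and Pa :: "'f \<Rightarrow> 'u"
  assumes fib: "is_fibration X B Po Pa"
begin

lemma funP: "is_functor X B Po Pa" using fib unfolding is_fibration_def by blast

sublocale X: category X using funP unfolding is_functor_def category_def by blast
sublocale B: category B using funP unfolding is_functor_def category_def by blast

lemma P_Ob[simp]: "a \<in> Ob X \<Longrightarrow> Po a \<in> Ob B"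
  using funP unfolding is_functor_def by blast
lemma P_Ar[simp]: "f \<in> Ar X \<Longrightarrow> Pa f \<in> Ar B"
  using funP unfolding is_functor_def hom_def by blast
lemma P_Dm[simp]: "f \<in> Ar X \<Longrightarrow> Dm B (Pa f) = Po (Dm X f)"
  using funP unfolding is_functor_def hom_def by blast
lemma P_Cd[simp]: "f \<in> Ar X \<Longrightarrow> Cd B (Pa f) = Po (Cd X f)"
  using funP unfolding is_functor_def hom_def by blast
lemma P_Idt[simp]: "a \<in> Ob X \<Longrightarrow> Pa (Idt X a) = Idt B (Po a)"
  using funP unfolding is_functor_def by blast
lemma P_Cp[simp]: "f \<in> Ar X \<Longrightarrow> g \<in> Ar X \<Longrightarrow> Cd X f = Dm X g \<Longrightarrow> Pa (Cp X g f) = Cp B (Pa g) (Pa f)"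
  using funP unfolding is_functor_def by blast

lemma cart_Ar: "cartesian X B Po Pa f \<Longrightarrow> f \<in> Ar X"
  unfolding cartesian_def by blast

lemma cart_lift:
  assumes "cartesian X B Po Pa f" "v \<in> Ar B" "g \<in> Ar X" "Cd X g = Cd X f" "Cd B v = Po (Dm X f)"
    "Pa g = Cp B (Pa f) v"
  obtains h where "h \<in> Ar X" "Dm X h = Dm X g" "Cd X h = Dm X f" "Cp X f h = g" "Pa h = v"
  using assms unfolding cartesian_def by metis

lemma cart_uniq:
  assumes c: "cartesian X B Po Pa f" and h: "h1 \<in> Ar X" "h2 \<in> Ar X" "Dm X h1 = Dm X h2"
    "Cd X h1 = Dm X f" "Cd X h2 = Dm X f" "Cp X f h1 = Cp X f h2" "Pa h1 = Pa h2"
  shows "h1 = h2"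
proof -
  have f: "f \<in> Ar X" using c cart_Ar by blast
  define g where "g = Cp X f h1"
  have g: "g \<in> Ar X" "Cd X g = Cd X f" "Pa g = Cp B (Pa f) (Pa h1)" "Dm X g = Dm X h1"
    using f h unfolding g_def by auto
  have v: "Pa h1 \<in> Ar B" "Cd B (Pa h1) = Po (Dm X f)" using h by auto
  have 1: "\<exists>!h. h \<in> Ar X \<and> Dm X h = Dm X g \<and> Cd X h = Dm X f \<and> Cp X f h = g \<and> Pa h = Pa h1"
    using c g v unfolding cartesian_def by blast
  show ?thesis
    apply (rule ex1E[OF 1])
    apply (rule trans)
    apply (erule allE[of _ h1])
    apply (erule impE)
    using h g_def g apply simp
    apply assumption
    apply (erule allE[of _ h2])
    apply (erule impE)
    using h g_def g apply simp
    apply simp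
    done
qed

lemma cart_vert:
  assumes "cartesian X B Po Pa f" "g \<in> Ar X" "Cd X g = Cd X f" "Pa g = Pa f"
  obtains h where "h \<in> Ar X" "Dm X h = Dm X g" "Cd X h = Dm X f" "Cp X f h = g" "Pa h = Idt B (Po (Dm X f))"
proof -
  have f: "f \<in> Ar X" using assms cart_Ar by blast
  show ?thesis
    apply (rule cart_lift[OF assms(1), of "Idt B (Po (Dm X f))" g])
    using assms f that by auto
qed

lemma vert_Dm: "x \<in> Ar X \<Longrightarrow> Pa x = Idt B I \<Longrightarrow> I \<in> Ob B \<Longrightarrow> Po (Dm X x) = I"
  by (metis B.Dm_Idt P_Dm)
lemma vert_Cd: "x \<in> Ar X \<Longrightarrow> Pa x = Idt B I \<Longrightarrow> I \<in> Ob B \<Longrightarrow> Po (Cd X x) = I"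
  by (metis B.Cd_Idt P_Cd)

end



locale ptd = fibctx X B Po Pa
  for X :: "('x, 'f) cat" and B :: "('i, 'u) cat" and Po :: "'x \<Rightarrow> 'i" and Pa :: "'f \<Rightarrow> 'u" +
  fixes r :: "'i \<Rightarrow> 'x" and ra :: "'u \<Rightarrow> 'f"
  assumes pt: "is_pointed X B Po Pa r ra"
begin

lemma funr: "is_functor B X r ra" using pt unfolding is_pointed_def by blast
lemma r_Ob[simp]: "I \<in> Ob B \<Longrightarrow> r I \<in> Ob X" using funr unfolding is_functor_def by blast
lemma Po_r[simp]: "I \<in> Ob B \<Longrightarrow> Po (r I) = I" using pt unfolding is_pointed_def by blast
lemma ra_Ar[simp]: "u \<in> Ar B \<Longrightarrow> ra u \<in> Ar X" using funr unfolding is_functor_def hom_def by blast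
lemma ra_Dm[simp]: "u \<in> Ar B \<Longrightarrow> Dm X (ra u) = r (Dm B u)" using funr unfolding is_functor_def hom_def by blast
lemma ra_Cd[simp]: "u \<in> Ar B \<Longrightarrow> Cd X (ra u) = r (Cd B u)" using funr unfolding is_functor_def hom_def by blast
lemma ra_Idt[simp]: "I \<in> Ob B \<Longrightarrow> ra (Idt B I) = Idt X (r I)" using funr unfolding is_functor_def by blast
lemma ra_Cp: "u \<in> Ar B \<Longrightarrow> v \<in> Ar B \<Longrightarrow> Cd B u = Dm B v \<Longrightarrow> ra (Cp B v u) = Cp X (ra v) (ra u)"
  using funr unfolding is_functor_def by blast
lemma Pa_ra[simp]: "u \<in> Ar B \<Longrightarrow> Pa (ra u) = u" using pt unfolding is_pointed_def by blast
lemma ra_cart: "u \<in> Ar B \<Longrightarrow> cartesian X B Po Pa (ra u)" using pt unfolding is_pointed_def by blast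

abbreviation "S \<equiv> slice X B Po Pa r ra"

lemma sOb[simp]: "(I,x) \<in> Ob S \<longleftrightarrow> I \<in> Ob B \<and> x \<in> Ar X \<and> Cd X x = r I \<and> Pa x = Idt B I"
  unfolding slice_def Let_def by simp

lemma sAr[simp]: "((I,x),(u,f),(J,y)) \<in> Ar S \<longleftrightarrow> (I,x) \<in> Ob S \<and> (J,y) \<in> Ob S \<and> u \<in> Ar B \<and>
   Dm B u = I \<and> Cd B u = J \<and> f \<in> Ar X \<and> Dm X f = Dm X x \<and> Cd X f = Dm X y \<and> Cp X y f = Cp X (ra u) x"
  unfolding slice_def Let_def hom_def by auto

lemma sDm[simp]: "Dm S m = fst m" unfolding slice_def Let_def by simp
lemma sCd[simp]: "Cd S m = snd (snd m)" unfolding slice_def Let_def by simp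
lemma sIdt[simp]: "Idt S (I,x) = ((I,x),(Idt B I, Idt X (Dm X x)),(I,x))" unfolding slice_def Let_def by simp
lemma sCp[simp]: "Cp S ((K,z),(w,g),(J,y)) ((I,x),(u,f),(J',y')) = ((I,x),(Cp B w u, Cp X g f),(J,y))"
  unfolding slice_def Let_def by simp

lemma sAr_Pa: assumes "((I,x),(u,f),(J,y)) \<in> Ar S" shows "Pa f = u"
proof -
  have a: "I \<in> Ob B" "x \<in> Ar X" "Cd X x = r I" "Pa x = Idt B I" "J \<in> Ob B" "y \<in> Ar X" "Cd X y = r J"
    "Pa y = Idt B J" "u \<in> Ar B" "Dm B u = I" "Cd B u = J" "f \<in> Ar X" "Dm X f = Dm X x" "Cd X f = Dm X y"
    "Cp X y f = Cp X (ra u) x" using assms by auto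
  have "Pa (Cp X y f) = Cp B (Pa y) (Pa f)" using a by (intro P_Cp) auto
  also have "... = Pa f" using a vert_Dm[of y J] by simp
  finally have 1: "Pa (Cp X y f) = Pa f" .
  have "Pa (Cp X (ra u) x) = Cp B (Pa (ra u)) (Pa x)" using a by (intro P_Cp) auto
  also have "... = u" using a by simp
  finally show ?thesis using 1 a by simp
qed

lemma sCp_Ar:
  assumes m: "((I,x),(u,f),(J,y)) \<in> Ar S" and n: "((J,y),(v,g),(K,z)) \<in> Ar S"
  shows "((I,x),(Cp B v u, Cp X g f),(K,z)) \<in> Ar S"
proof -
  have a: "I \<in> Ob B" "x \<in> Ar X" "Cd X x = r I" "Pa x = Idt B I" "J \<in> Ob B" "y \<in> Ar X" "Cd X y = r J"
    "Pa y = Idt B J" "u \<in> Ar B" "Dm B u = I" "Cd B u = J" "f \<in> Ar X" "Dm X f = Dm X x" "Cd X f = Dm X y"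
    "Cp X y f = Cp X (ra u) x" using m by auto
  have b: "K \<in> Ob B" "z \<in> Ar X" "Cd X z = r K" "Pa z = Idt B K" "v \<in> Ar B" "Dm B v = J" "Cd B v = K"
    "g \<in> Ar X" "Dm X g = Dm X y" "Cd X g = Dm X z" "Cp X z g = Cp X (ra v) y" using n by auto
  have "Cp X z (Cp X g f) = Cp X (Cp X z g) f" using a b by (intro X.assoc) auto
  also have "... = Cp X (Cp X (ra v) y) f" using b by simp
  also have "... = Cp X (ra v) (Cp X y f)" using a b by (intro X.assoc[symmetric]) auto
  also have "... = Cp X (ra v) (Cp X (ra u) x)" using a by simp
  also have "... = Cp X (Cp X (ra v) (ra u)) x" using a b by (intro X.assoc) auto
  also have "... = Cp X (ra (Cp B v u)) x" using a b by (simp add: ra_Cp)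
  finally have "Cp X z (Cp X g f) = Cp X (ra (Cp B v u)) x" .
  then show ?thesis using a b by simp
qed

lemma trip: obtains I x u f J y where "m = ((I,x),(u,f),(J,y))"
  by (metis prod.collapse)

lemma S_cat: "is_category S"
  unfolding is_category_def
proof (intro conjI)
  show "\<forall>f\<in>Ar S. Dm S f \<in> Ob S \<and> Cd S f \<in> Ob S"
  proof
    fix m assume m: "m \<in> Ar S"
    obtain I x u f J y where mm: "m = ((I,x),(u,f),(J,y))" by (rule trip)
    show "Dm S m \<in> Ob S \<and> Cd S m \<in> Ob S" using m mm by (simp del: sOb)
  qed
  show "\<forall>a\<in>Ob S. Idt S a \<in> hom S a a"
  proof
    fix a assume a: "a \<in> Ob S"
    obtain I x where aa: "a = (I,x)" by fastforce
    show "Idt S a \<in> hom S a a" using a by (auto simp: aa hom_def)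
  qed
  show "\<forall>f\<in>Ar S. \<forall>g\<in>Ar S. Cd S f = Dm S g \<longrightarrow> Cp S g f \<in> hom S (Dm S f) (Cd S g)"
  proof (intro ballI impI)
    fix m n assume m: "m \<in> Ar S" and n: "n \<in> Ar S" and e: "Cd S m = Dm S n"
    obtain I x u f J y where mm: "m = ((I,x),(u,f),(J,y))" by (rule trip)
    obtain J' y' v g K z where nn: "n = ((J',y'),(v,g),(K,z))" by (rule trip)
    from e have "J' = J" "y' = y" by (simp_all add: mm nn)
    then show "Cp S n m \<in> hom S (Dm S m) (Cd S n)"
      using sCp_Ar[of I x u f J y v g K z] m n by (simp add: mm nn hom_def del: sAr)
  qed
  show "\<forall>f\<in>Ar S. Cp S (Idt S (Cd S f)) f = f \<and> Cp S f (Idt S (Dm S f)) = f"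
  proof
    fix m assume m: "m \<in> Ar S"
    obtain I x u f J y where mm: "m = ((I,x),(u,f),(J,y))" by (rule trip)
    show "Cp S (Idt S (Cd S m)) m = m \<and> Cp S m (Idt S (Dm S m)) = m" using m by (auto simp: mm)
  qed
  show "\<forall>f\<in>Ar S. \<forall>g\<in>Ar S. \<forall>h\<in>Ar S. Cd S f = Dm S g \<and> Cd S g = Dm S h \<longrightarrow>
         Cp S h (Cp S g f) = Cp S (Cp S h g) f"
  proof (intro ballI impI)
    fix m n k assume m: "m \<in> Ar S" and n: "n \<in> Ar S" and k: "k \<in> Ar S"
      and e: "Cd S m = Dm S n \<and> Cd S n = Dm S k"
    obtain I x u f J y where mm: "m = ((I,x),(u,f),(J,y))" by (rule trip)
    obtain J' y' v g K z where nn: "n = ((J',y'),(v,g),(K,z))" by (rule trip)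
    obtain K' z' w h L t where kk: "k = ((K',z'),(w,h),(L,t))" by (rule trip)
    from e have "J' = J" "y' = y" "K' = K" "z' = z" by (simp_all add: mm nn kk)
    then show "Cp S k (Cp S n m) = Cp S (Cp S k n) m"
      using m n k by (auto simp: mm nn kk B.assoc X.assoc)
  qed
qed

end


context ptd begin

lemma sAr_E:
  assumes "((I,x),(u,f),(J,y)) \<in> Ar S"
  shows "I \<in> Ob B" "x \<in> Ar X" "Cd X x = r I" "Pa x = Idt B I" "J \<in> Ob B" "y \<in> Ar X" "Cd X y = r J"
    "Pa y = Idt B J" "u \<in> Ar B" "Dm B u = I" "Cd B u = J" "f \<in> Ar X" "Dm X f = Dm X x" "Cd X f = Dm X y"
    "Cp X y f = Cp X (ra u) x" "Pa f = u" "Po (Dm X x) = I" "Po (Dm X y) = J"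
  using assms sAr_Pa[OF assms] vert_Dm[of x I] vert_Dm[of y J] by auto

lemma key_eq:
  assumes m: "((I,x),(u,f),(J,y)) \<in> Ar S" and v: "v \<in> Ar B" "Cd B v = I"
    and z: "z \<in> Ar X" "Cd X z = r (Dm B v)" "Pa z = Idt B (Dm B v)"
    and h: "h \<in> Ar X" "Dm X h = Dm X z" "Cd X h = Dm X x" "Pa h = v"
    and e: "Cp X y (Cp X f h) = Cp X (ra (Cp B u v)) z"
  shows "Cp X x h = Cp X (ra v) z"
proof -
  note a = sAr_E[OF m]
  have "Cp X (ra u) (Cp X x h) = Cp X (Cp X (ra u) x) h" using a h by (intro X.assoc) auto
  also have "... = Cp X (Cp X y f) h" using a by simp_all
  also have "... = Cp X y (Cp X f h)" using a h by (intro X.assoc[symmetric]) auto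
  also have "... = Cp X (ra (Cp B u v)) z" by (rule e)
  also have "... = Cp X (Cp X (ra u) (ra v)) z" using a v by (simp add: ra_Cp)
  also have "... = Cp X (ra u) (Cp X (ra v) z)" using a v z by (intro X.assoc[symmetric]) auto
  finally have 1: "Cp X (ra u) (Cp X x h) = Cp X (ra u) (Cp X (ra v) z)" .
  have Ka: "Dm B v \<in> Ob B" using v by simp_all
  show ?thesis
  proof (rule cart_uniq[OF ra_cart[OF a(9)]])
    show "Cp X x h \<in> Ar X" "Cp X (ra v) z \<in> Ar X" using a h v z by auto
    show "Dm X (Cp X x h) = Dm X (Cp X (ra v) z)" using a h v z by auto
    show "Cd X (Cp X x h) = Dm X (ra u)" "Cd X (Cp X (ra v) z) = Dm X (ra u)" using a h v z by auto
    show "Cp X (ra u) (Cp X x h) = Cp X (ra u) (Cp X (ra v) z)" by (rule 1)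
    have "Pa (Cp X x h) = v" using a h v by auto
    moreover have "Pa (Cp X (ra v) z) = v" using a h v z Ka by auto
    ultimately show "Pa (Cp X x h) = Pa (Cp X (ra v) z)" by simp_all
  qed
qed

lemma S_cart_if:
  assumes m: "((I,x),(u,f),(J,y)) \<in> Ar S" and cf: "cartesian X B Po Pa f"
  shows "cartesian S B slice_proj_o slice_proj_a ((I,x),(u,f),(J,y))"
  unfolding cartesian_def
proof (intro conjI ballI impI)
  note a = sAr_E[OF m]
  show "((I,x),(u,f),(J,y)) \<in> Ar S" by (rule m)
  fix v gg
  assume v: "v \<in> Ar B" and gg: "gg \<in> Ar S"
    and c: "Cd S gg = Cd S ((I,x),(u,f),(J,y)) \<and> Cd B v = slice_proj_o (Dm S ((I,x),(u,f),(J,y))) \<and>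
        slice_proj_a gg = Cp B (slice_proj_a ((I,x),(u,f),(J,y))) v"
  obtain K z w g J' y' where ggt: "gg = ((K,z),(w,g),(J',y'))" by (rule trip)
  have e: "J' = J" "y' = y" "Cd B v = I" "w = Cp B u v" using c by (auto simp: ggt slice_proj_o_def slice_proj_a_def)
  have gA: "((K,z),(w,g),(J,y)) \<in> Ar S" using gg ggt e by simp_all
  note b = sAr_E[OF gA]
  have K: "K = Dm B v" using b e a v by simp_all
  obtain h where h: "h \<in> Ar X" "Dm X h = Dm X g" "Cd X h = Dm X f" "Cp X f h = g" "Pa h = v"
    using cart_lift[OF cf v b(12)] a b e by auto
  have eq: "Cp X x h = Cp X (ra v) z"
    apply (rule key_eq[OF m v e(3)])
    using a b h K e by auto
  have hA: "((K,z),(v,h),(I,x)) \<in> Ar S" using a b h K e v eq by auto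
  show "\<exists>!hh. hh \<in> Ar S \<and> Dm S hh = Dm S gg \<and> Cd S hh = Dm S ((I,x),(u,f),(J,y)) \<and>
            Cp S ((I,x),(u,f),(J,y)) hh = gg \<and> slice_proj_a hh = v"
  proof (rule ex1I[of _ "((K,z),(v,h),(I,x))"])
    show "((K,z),(v,h),(I,x)) \<in> Ar S \<and> Dm S ((K,z),(v,h),(I,x)) = Dm S gg \<and>
      Cd S ((K,z),(v,h),(I,x)) = Dm S ((I,x),(u,f),(J,y)) \<and>
      Cp S ((I,x),(u,f),(J,y)) ((K,z),(v,h),(I,x)) = gg \<and> slice_proj_a ((K,z),(v,h),(I,x)) = v"
      using hA h e by (simp add: ggt slice_proj_a_def del: sAr)
    fix hh assume hh: "hh \<in> Ar S \<and> Dm S hh = Dm S gg \<and> Cd S hh = Dm S ((I,x),(u,f),(J,y)) \<and>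
            Cp S ((I,x),(u,f),(J,y)) hh = gg \<and> slice_proj_a hh = v"
    obtain K1 z1 v1 h1 I1 x1 where hht: "hh = ((K1,z1),(v1,h1),(I1,x1))" by (rule trip)
    have e2: "K1 = K" "z1 = z" "I1 = I" "x1 = x" "v1 = v" "Cp X f h1 = g"
      using hh by (auto simp: hht ggt slice_proj_a_def)
    have h1A: "((K,z),(v,h1),(I,x)) \<in> Ar S" using conjunct1[OF hh] unfolding hht e2(1-5) .
    note c1 = sAr_E[OF h1A]
    have "h1 = h"
      apply (rule cart_uniq[OF cf])
      using c1 h a b e2(6) by simp_all
    then show "hh = ((K,z),(v,h),(I,x))" using hht e2 by simp_all
  qed
qed

lemma S_cart_only_if:
  assumes m: "((I,x),(u,f),(J,y)) \<in> Ar S" and cS: "cartesian S B slice_proj_o slice_proj_a ((I,x),(u,f),(J,y))"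
  shows "cartesian X B Po Pa f"
  unfolding cartesian_def
proof (intro conjI ballI impI)
  note a = sAr_E[OF m]
  show "f \<in> Ar X" by (rule a)
  fix v g
  assume v: "v \<in> Ar B" and g: "g \<in> Ar X"
    and c: "Cd X g = Cd X f \<and> Cd B v = Po (Dm X f) \<and> Pa g = Cp B (Pa f) v"
  define K where "K = Dm B v"
  define w where "w = Cp B u v"
  have vI: "Cd B v = I" using c a by simp_all
  have w: "w \<in> Ar B" "Dm B w = K" "Cd B w = J" using v vI a unfolding w_def K_def by simp_all
  have Pg: "Pa g = w" using c a unfolding w_def by simp_all
  have yg: "Cp X y g \<in> Ar X" "Cd X (Cp X y g) = Cd X (ra w)" "Pa (Cp X y g) = Pa (ra w)"
    using a g c w Pg by simp_all
  obtain z where z: "z \<in> Ar X" "Dm X z = Dm X (Cp X y g)" "Cd X z = Dm X (ra w)" "Cp X (ra w) z = Cp X y g"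
    "Pa z = Idt B (Po (Dm X (ra w)))"
    by (rule cart_vert[OF ra_cart[OF w(1)] yg])
  have K: "K \<in> Ob B" using v K_def by simp_all
  have z2: "Dm X z = Dm X g" "Cd X z = r K" "Pa z = Idt B K" using z w a g c K by simp_all
  have gA: "((K,z),(w,g),(J,y)) \<in> Ar S" using z z2 w a g c K by simp_all
  have all: "\<forall>v\<in>Ar B. \<forall>g\<in>Ar S. Cd S g = Cd S ((I,x),(u,f),(J,y)) \<and>
      Cd B v = slice_proj_o (Dm S ((I,x),(u,f),(J,y))) \<and>
      slice_proj_a g = Cp B (slice_proj_a ((I,x),(u,f),(J,y))) v \<longrightarrow>
      (\<exists>!h. h \<in> Ar S \<and> Dm S h = Dm S g \<and> Cd S h = Dm S ((I,x),(u,f),(J,y)) \<and>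
         Cp S ((I,x),(u,f),(J,y)) h = g \<and> slice_proj_a h = v)"
    using cS unfolding cartesian_def by blast
  have pre: "Cd S ((K,z),(w,g),(J,y)) = Cd S ((I,x),(u,f),(J,y)) \<and>
      Cd B v = slice_proj_o (Dm S ((I,x),(u,f),(J,y))) \<and>
      slice_proj_a ((K,z),(w,g),(J,y)) = Cp B (slice_proj_a ((I,x),(u,f),(J,y))) v"
    using vI by (simp add: slice_proj_o_def slice_proj_a_def w_def del: sAr)
  have ex: "\<exists>!hh. hh \<in> Ar S \<and> Dm S hh = Dm S ((K,z),(w,g),(J,y)) \<and> Cd S hh = Dm S ((I,x),(u,f),(J,y)) \<and>
            Cp S ((I,x),(u,f),(J,y)) hh = ((K,z),(w,g),(J,y)) \<and> slice_proj_a hh = v"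
    using all v gA pre by blast
  obtain hh where hhP: "hh \<in> Ar S \<and> Dm S hh = Dm S ((K,z),(w,g),(J,y)) \<and> Cd S hh = Dm S ((I,x),(u,f),(J,y)) \<and>
            Cp S ((I,x),(u,f),(J,y)) hh = ((K,z),(w,g),(J,y)) \<and> slice_proj_a hh = v"
    and uq: "\<And>h2. h2 \<in> Ar S \<and> Dm S h2 = Dm S ((K,z),(w,g),(J,y)) \<and> Cd S h2 = Dm S ((I,x),(u,f),(J,y)) \<and>
            Cp S ((I,x),(u,f),(J,y)) h2 = ((K,z),(w,g),(J,y)) \<and> slice_proj_a h2 = v \<Longrightarrow> h2 = hh"
    using ex by (elim ex1E) blast
  have hh: "hh \<in> Ar S" "Dm S hh = (K,z)" "Cd S hh = (I,x)"
     "Cp S ((I,x),(u,f),(J,y)) hh = ((K,z),(w,g),(J,y))" "slice_proj_a hh = v"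
    using hhP by (simp_all del: sAr sDm sCd) (simp_all del: sAr)
  obtain K1 z1 v1 h I1 x1 where hht: "hh = ((K1,z1),(v1,h),(I1,x1))" by (rule trip)
  have e2: "K1 = K" "z1 = z" "I1 = I" "x1 = x" "v1 = v" "Cp X f h = g"
    using hh by (auto simp: hht slice_proj_a_def)
  have hA: "((K,z),(v,h),(I,x)) \<in> Ar S" using hh e2 hht by simp_all
  note hc = sAr_E[OF hA]
  show "\<exists>!h. h \<in> Ar X \<and> Dm X h = Dm X g \<and> Cd X h = Dm X f \<and> Cp X f h = g \<and> Pa h = v"
  proof (rule ex1I[of _ h])
    show "h \<in> Ar X \<and> Dm X h = Dm X g \<and> Cd X h = Dm X f \<and> Cp X f h = g \<and> Pa h = v"
      using hc e2 z2 a by simp_all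
    fix h1 assume h1: "h1 \<in> Ar X \<and> Dm X h1 = Dm X g \<and> Cd X h1 = Dm X f \<and> Cp X f h1 = g \<and> Pa h1 = v"
    have eq: "Cp X x h1 = Cp X (ra v) z"
      apply (rule key_eq[OF m v vI])
      using z z2 h1 a K_def w_def by simp_all
    have "((K,z),(v,h1),(I,x)) \<in> Ar S" using h1 eq z z2 a K K_def v vI by simp_all
    then have "((K,z),(v,h1),(I,x)) = hh"
      by (intro uq) (simp add: h1 slice_proj_a_def w_def del: sAr)
    then show "h1 = h" using hht by simp_all
  qed
qed

lemma S_cart_iff:
  assumes m: "((I,x),(u,f),(J,y)) \<in> Ar S"
  shows "cartesian S B slice_proj_o slice_proj_a ((I,x),(u,f),(J,y)) \<longleftrightarrow> cartesian X B Po Pa f"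
  using S_cart_if[OF m] S_cart_only_if[OF m] by blast

lemma S_proj_fun: "is_functor S B slice_proj_o slice_proj_a"
  unfolding is_functor_def
proof (intro conjI ballI impI)
  show "is_category S" by (rule S_cat)
  show "is_category B" using B.is_cat .
  fix a assume a: "a \<in> Ob S"
  obtain I x where aa: "a = (I,x)" by fastforce
  show "slice_proj_o a \<in> Ob B" using a aa by (simp add: slice_proj_o_def)
  show "slice_proj_a (Idt S a) = Idt B (slice_proj_o a)" using a aa by (simp add: slice_proj_o_def slice_proj_a_def)
next
  fix m assume m: "m \<in> Ar S"
  obtain I x u f J y where mm: "m = ((I,x),(u,f),(J,y))" by (rule trip)
  show "slice_proj_a m \<in> hom B (slice_proj_o (Dm S m)) (slice_proj_o (Cd S m))"
    using m by (simp add: mm slice_proj_o_def slice_proj_a_def hom_def)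
next
  fix m n assume m: "m \<in> Ar S" and n: "n \<in> Ar S" and e: "Cd S m = Dm S n"
  obtain I x u f J y where mm: "m = ((I,x),(u,f),(J,y))" by (rule trip)
  obtain J' y' v g K z where nn: "n = ((J',y'),(v,g),(K,z))" by (rule trip)
  show "slice_proj_a (Cp S n m) = Cp B (slice_proj_a n) (slice_proj_a m)"
    by (simp add: mm nn slice_proj_a_def)
qed

lemma S_fib: "is_fibration S B slice_proj_o slice_proj_a"
  unfolding is_fibration_def
proof (intro conjI ballI impI)
  show "is_functor S B slice_proj_o slice_proj_a" by (rule S_proj_fun)
  fix Y u assume Y: "Y \<in> Ob S" and u: "u \<in> Ar B" and c: "Cd B u = slice_proj_o Y"
  obtain J y where YY: "Y = (J,y)" by fastforce
  have a: "J \<in> Ob B" "y \<in> Ar X" "Cd X y = r J" "Pa y = Idt B J" using Y YY by simp_all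
  have cu: "Cd B u = J" using c YY by (simp add: slice_proj_o_def)
  define I where "I = Dm B u"
  have I: "I \<in> Ob B" using u I_def by simp
  have Py: "Po (Dm X y) = J" using a vert_Dm by blast
  have "Dm X y \<in> Ob X" using a by simp
  then obtain c where c: "Cd X c = Dm X y" "Pa c = u" "cartesian X B Po Pa c"
    using fib u cu Py unfolding is_fibration_def by metis
  have cA: "c \<in> Ar X" using c cart_Ar by blast
  have yc: "Cp X y c \<in> Ar X" "Cd X (Cp X y c) = Cd X (ra u)" "Pa (Cp X y c) = Pa (ra u)"
    using a c cA cu u by simp_all
  obtain y' where y': "y' \<in> Ar X" "Dm X y' = Dm X (Cp X y c)" "Cd X y' = Dm X (ra u)"
     "Cp X (ra u) y' = Cp X y c" "Pa y' = Idt B (Po (Dm X (ra u)))"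
    by (rule cart_vert[OF ra_cart[OF u] yc])
  have mA: "((I,y'),(u,c),(J,y)) \<in> Ar S" using y' a c cA u I I_def cu by simp
  show "\<exists>f. Cd S f = Y \<and> slice_proj_a f = u \<and> cartesian S B slice_proj_o slice_proj_a f"
    apply (rule exI[of _ "((I,y'),(u,c),(J,y))"])
    using mA S_cart_iff[OF mA] c YY by (simp add: slice_proj_a_def del: sAr)
qed

end


lemma fiber_simps[simp]:
  "Ob (fiber X B Po Pa I) = {a \<in> Ob X. Po a = I}"
  "Ar (fiber X B Po Pa I) = {f \<in> Ar X. Pa f = Idt B I}"
  "Dm (fiber X B Po Pa I) = Dm X" "Cd (fiber X B Po Pa I) = Cd X"
  "Idt (fiber X B Po Pa I) = Idt X" "Cp (fiber X B Po Pa I) = Cp X"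
  unfolding fiber_def by simp_all

lemma pb_E:
  assumes "is_pullback (fiber X B Po Pa I) a b pa pb"
  shows "a \<in> Ar X" "b \<in> Ar X" "pa \<in> Ar X" "pb \<in> Ar X" "Pa a = Idt B I" "Pa b = Idt B I"
    "Pa pa = Idt B I" "Pa pb = Idt B I" "Cd X a = Cd X b" "Cd X pa = Dm X a" "Cd X pb = Dm X b"
    "Dm X pa = Dm X pb" "Cp X a pa = Cp X b pb"
proof -
  have H: "a \<in> Ar X \<and> b \<in> Ar X \<and> pa \<in> Ar X \<and> pb \<in> Ar X \<and> Pa a = Idt B I \<and> Pa b = Idt B I \<and>
    Pa pa = Idt B I \<and> Pa pb = Idt B I \<and> Cd X a = Cd X b \<and> Cd X pa = Dm X a \<and> Cd X pb = Dm X b \<and>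
    Dm X pa = Dm X pb \<and> Cp X a pa = Cp X b pb"
    using assms unfolding is_pullback_def fiber_simps mem_Collect_eq by (elim conjE) (intro conjI; assumption)
  show "a \<in> Ar X" "b \<in> Ar X" "pa \<in> Ar X" "pb \<in> Ar X" "Pa a = Idt B I" "Pa b = Idt B I"
    "Pa pa = Idt B I" "Pa pb = Idt B I" "Cd X a = Cd X b" "Cd X pa = Dm X a" "Cd X pb = Dm X b"
    "Dm X pa = Dm X pb" "Cp X a pa = Cp X b pb" by (simp_all only: H)
qed

lemma pb_U:
  assumes "is_pullback (fiber X B Po Pa I) a b pa pb"
    "h \<in> Ar X" "Pa h = Idt B I" "k \<in> Ar X" "Pa k = Idt B I" "Dm X h = Dm X k" "Cd X h = Dm X a"
    "Cd X k = Dm X b" "Cp X a h = Cp X b k"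
  shows "\<exists>!m. (m \<in> Ar X \<and> Pa m = Idt B I) \<and> Dm X m = Dm X h \<and> Cd X m = Dm X pa \<and> Cp X pa m = h \<and> Cp X pb m = k"
proof -
  have all: "\<forall>h\<in>{f \<in> Ar X. Pa f = Idt B I}. \<forall>k\<in>{f \<in> Ar X. Pa f = Idt B I}. Dm X h = Dm X k \<and> Cd X h = Dm X a \<and> Cd X k = Dm X b \<and>
        Cp X a h = Cp X b k \<longrightarrow>
        (\<exists>!m. m \<in> {f \<in> Ar X. Pa f = Idt B I} \<and> Dm X m = Dm X h \<and> Cd X m = Dm X pa \<and>
               Cp X pa m = h \<and> Cp X pb m = k)"
    using assms(1) unfolding is_pullback_def fiber_simps by (elim conjE) assumption
  have hm: "h \<in> {f \<in> Ar X. Pa f = Idt B I}" "k \<in> {f \<in> Ar X. Pa f = Idt B I}" using assms(2-5) by simp_all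
  have "\<exists>!m. m \<in> {f \<in> Ar X. Pa f = Idt B I} \<and> Dm X m = Dm X h \<and> Cd X m = Dm X pa \<and>
               Cp X pa m = h \<and> Cp X pb m = k"
    apply (rule mp[OF bspec[OF bspec[OF all hm(1)] hm(2)]])
    using assms(6-) by blast
  then show ?thesis by (simp only: mem_Collect_eq)
qed

locale main = p: ptd X B Po Pa po pa + q: ptd X B Po Pa qo qa
  for X :: "('x, 'f) cat" and B :: "('i, 'u) cat" and Po :: "'x \<Rightarrow> 'i" and Pa :: "'f \<Rightarrow> 'u"
    and po :: "'i \<Rightarrow> 'x" and pa :: "'u \<Rightarrow> 'f" and qo :: "'i \<Rightarrow> 'x" and qa :: "'u \<Rightarrow> 'f" +
  fixes \<alpha> :: "'i \<Rightarrow> 'f"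
  assumes fpb: "fibered_pullbacks X B Po Pa"
    and nat: "vertical_nat_trans X B Po Pa po pa qo qa \<alpha>"
begin

lemma al_Ar[simp]: "I \<in> Ob B \<Longrightarrow> \<alpha> I \<in> Ar X"
  using nat unfolding vertical_nat_trans_def hom_def by blast
lemma al_Dm[simp]: "I \<in> Ob B \<Longrightarrow> Dm X (\<alpha> I) = po I"
  using nat unfolding vertical_nat_trans_def hom_def by blast
lemma al_Cd[simp]: "I \<in> Ob B \<Longrightarrow> Cd X (\<alpha> I) = qo I"
  using nat unfolding vertical_nat_trans_def hom_def by blast
lemma al_Pa[simp]: "I \<in> Ob B \<Longrightarrow> Pa (\<alpha> I) = Idt B I"
  using nat unfolding vertical_nat_trans_def hom_def by blast
lemma al_nat: "u \<in> Ar B \<Longrightarrow> Cp X (qa u) (\<alpha> (Dm B u)) = Cp X (\<alpha> (Cd B u)) (pa u)"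
  using nat unfolding vertical_nat_trans_def by blast

lemma fpb_inst:
  assumes "w \<in> Ar B" "is_pullback (fiber X B Po Pa (Cd B w)) a b pa0 pb0"
    "cartesian X B Po Pa cA" "Pa cA = w" "Cd X cA = Dm X a"
    "cartesian X B Po Pa cB" "Pa cB = w" "Cd X cB = Dm X b"
    "cartesian X B Po Pa cC" "Pa cC = w" "Cd X cC = Cd X a"
    "cartesian X B Po Pa cD" "Pa cD = w" "Cd X cD = Dm X pa0"
    "a' \<in> Ar X" "Pa a' = Idt B (Dm B w)" "Dm X a' = Dm X cA" "Cd X a' = Dm X cC" "Cp X cC a' = Cp X a cA"
    "b' \<in> Ar X" "Pa b' = Idt B (Dm B w)" "Dm X b' = Dm X cB" "Cd X b' = Dm X cC" "Cp X cC b' = Cp X b cB"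
    "pa' \<in> Ar X" "Pa pa' = Idt B (Dm B w)" "Dm X pa' = Dm X cD" "Cd X pa' = Dm X cA" "Cp X cA pa' = Cp X pa0 cD"
    "pb' \<in> Ar X" "Pa pb' = Idt B (Dm B w)" "Dm X pb' = Dm X cD" "Cd X pb' = Dm X cB" "Cp X cB pb' = Cp X pb0 cD"
  shows "is_pullback (fiber X B Po Pa (Dm B w)) a' b' pa' pb'"
proof -
  have all: "\<forall>u\<in>Ar B. \<forall>a b pa pb cA cB cC cD a' b' pa' pb'.
        is_pullback (fiber X B Po Pa (Cd B u)) a b pa pb \<and>
        cartesian X B Po Pa cA \<and> Pa cA = u \<and> Cd X cA = Dm X a \<and>
        cartesian X B Po Pa cB \<and> Pa cB = u \<and> Cd X cB = Dm X b \<and>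
        cartesian X B Po Pa cC \<and> Pa cC = u \<and> Cd X cC = Cd X a \<and>
        cartesian X B Po Pa cD \<and> Pa cD = u \<and> Cd X cD = Dm X pa \<and>
        a' \<in> Ar (fiber X B Po Pa (Dm B u)) \<and> Dm X a' = Dm X cA \<and> Cd X a' = Dm X cC \<and>
          Cp X cC a' = Cp X a cA \<and>
        b' \<in> Ar (fiber X B Po Pa (Dm B u)) \<and> Dm X b' = Dm X cB \<and> Cd X b' = Dm X cC \<and>
          Cp X cC b' = Cp X b cB \<and>
        pa' \<in> Ar (fiber X B Po Pa (Dm B u)) \<and> Dm X pa' = Dm X cD \<and> Cd X pa' = Dm X cA \<and>
          Cp X cA pa' = Cp X pa cD \<and>
        pb' \<in> Ar (fiber X B Po Pa (Dm B u)) \<and> Dm X pb' = Dm X cD \<and> Cd X pb' = Dm X cB \<and>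
          Cp X cB pb' = Cp X pb cD
        \<longrightarrow> is_pullback (fiber X B Po Pa (Dm B u)) a' b' pa' pb'"
    using fpb unfolding fibered_pullbacks_def by (elim conjE) assumption
  show ?thesis
    apply (rule all[rule_format, of w a b pa0 pb0 cA cB cC cD a' b' pa' pb'])
    using assms apply blast
    using assms by simp
qed

end


context main begin

lemma pb_univ:
  assumes J: "J \<in> Ob B" and y: "y \<in> Ar X" "Cd X y = qo J" "Pa y = Idt B J"
    and pb: "is_pullback (fiber X B Po Pa J) y (\<alpha> J) f y'"
    and h1: "h1 \<in> Ar X" "Cd X h1 = Dm X y" and h2: "h2 \<in> Ar X" "Cd X h2 = po J"
    and hd: "Dm X h1 = Dm X h2" and he: "Cp X y h1 = Cp X (\<alpha> J) h2"
  shows "\<exists>!l. l \<in> Ar X \<and> Dm X l = Dm X h1 \<and> Cd X l = Dm X f \<and> Cp X f l = h1 \<and> Cp X y' l = h2"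
proof -
  note P = pb_E[OF pb]
  define w where "w = Pa h1"
  define K where "K = Dm B w"
  have w: "w \<in> Ar B" "Cd B w = J" "K \<in> Ob B" using h1 y J p.vert_Dm[of y J] unfolding w_def K_def by simp_all
  have Kh: "Po (Dm X h1) = K" using h1 unfolding w_def K_def by simp
  have Py: "Po (Dm X y) = J" using y J p.vert_Dm by blast
  have Pf: "Po (Dm X f) = J" using P J p.vert_Dm by blast
  have "Pa (Cp X y h1) = w" using y h1 w Py unfolding w_def by simp
  moreover have "Pa (Cp X (\<alpha> J) h2) = Pa h2" using J h2 p.vert_Dm[of "\<alpha> J" J] by simp
  ultimately have Ph2: "Pa h2 = w" using he by simp
  have "Dm X y \<in> Ob X" using y by simp
  then obtain cA where cA: "Cd X cA = Dm X y" "Pa cA = w" "cartesian X B Po Pa cA"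
    using p.fib w Py unfolding is_fibration_def by metis
  have cAA: "cA \<in> Ar X" using cA p.cart_Ar by blast
  have "Dm X f \<in> Ob X" using P by simp
  then obtain cD where cD: "Cd X cD = Dm X f" "Pa cD = w" "cartesian X B Po Pa cD"
    using p.fib w Pf unfolding is_fibration_def by metis
  have cDA: "cD \<in> Ar X" using cD p.cart_Ar by blast
  have PcA: "Po (Dm X cA) = K" using cA cAA unfolding K_def by (metis p.P_Dm)
  have PcD: "Po (Dm X cD) = K" using cD cDA unfolding K_def by (metis p.P_Dm)
  have "Cp X y cA \<in> Ar X" "Cd X (Cp X y cA) = Cd X (qa w)" "Pa (Cp X y cA) = Pa (qa w)"
    using y cA cAA w J by simp_all
  then obtain a' where a': "a' \<in> Ar X" "Dm X a' = Dm X (Cp X y cA)" "Cd X a' = Dm X (qa w)"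
     "Cp X (qa w) a' = Cp X y cA" "Pa a' = Idt B (Po (Dm X (qa w)))"
    using p.cart_vert[OF q.ra_cart[OF w(1)]] by blast
  have "Cp X f cD \<in> Ar X" "Cd X (Cp X f cD) = Cd X cA" "Pa (Cp X f cD) = Pa cA"
    using P cD cDA cA w J by simp_all
  then obtain pa' where pa': "pa' \<in> Ar X" "Dm X pa' = Dm X (Cp X f cD)" "Cd X pa' = Dm X cA"
     "Cp X cA pa' = Cp X f cD" "Pa pa' = Idt B (Po (Dm X cA))"
    using p.cart_vert[OF cA(3)] by blast
  have "Cp X y' cD \<in> Ar X" "Cd X (Cp X y' cD) = Cd X (pa w)" "Pa (Cp X y' cD) = Pa (pa w)"
    using P cD cDA w J by simp_all
  then obtain pb' where pb': "pb' \<in> Ar X" "Dm X pb' = Dm X (Cp X y' cD)" "Cd X pb' = Dm X (pa w)"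
     "Cp X (pa w) pb' = Cp X y' cD" "Pa pb' = Idt B (Po (Dm X (pa w)))"
    using p.cart_vert[OF p.ra_cart[OF w(1)]] by blast
  have natw: "Cp X (qa w) (\<alpha> K) = Cp X (\<alpha> J) (pa w)" using al_nat[OF w(1)] w unfolding K_def by simp
  have pbK: "is_pullback (fiber X B Po Pa K) a' (\<alpha> K) pa' pb'"
    unfolding K_def
  proof (rule fpb_inst[OF w(1), where cA=cA and cB="pa w" and cC="qa w" and cD=cD])
    show "is_pullback (fiber X B Po Pa (Cd B w)) y (\<alpha> J) f y'" using pb w by simp
  qed (use cA cD P a' pa' pb' w J y cAA cDA natw PcA PcD p.ra_cart q.ra_cart K_def in simp_all)
  note Q = pb_E[OF pbK]
  have "Cd X h1 = Cd X cA" "Pa h1 = Pa cA" using h1 cA unfolding w_def by simp_all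
  then obtain m1 where m1: "m1 \<in> Ar X" "Dm X m1 = Dm X h1" "Cd X m1 = Dm X cA" "Cp X cA m1 = h1"
    "Pa m1 = Idt B (Po (Dm X cA))"
    using p.cart_vert[OF cA(3) h1(1)] by blast
  have "Cd X h2 = Cd X (pa w)" "Pa h2 = Pa (pa w)" using h2 w Ph2 by simp_all
  then obtain m2 where m2: "m2 \<in> Ar X" "Dm X m2 = Dm X h2" "Cd X m2 = Dm X (pa w)" "Cp X (pa w) m2 = h2"
    "Pa m2 = Idt B (Po (Dm X (pa w)))"
    using p.cart_vert[OF p.ra_cart[OF w(1)] h2(1)] by blast
  have eqa: "Cp X a' m1 = Cp X (\<alpha> K) m2"
  proof (rule p.cart_uniq[OF q.ra_cart[OF w(1)]])
    show "Cp X a' m1 \<in> Ar X" "Cp X (\<alpha> K) m2 \<in> Ar X" using a' m1 m2 cAA cA y w J K_def by simp_all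
    show "Dm X (Cp X a' m1) = Dm X (Cp X (\<alpha> K) m2)" using a' m1 m2 cAA cA y w J hd K_def by simp
    show "Cd X (Cp X a' m1) = Dm X (qa w)" "Cd X (Cp X (\<alpha> K) m2) = Dm X (qa w)"
      using a' m1 m2 cAA y w J cA K_def by simp_all
    have "Cp X (qa w) (Cp X a' m1) = Cp X (Cp X (qa w) a') m1"
      using a' m1 m2 cAA y w J cA K_def by (intro p.X.assoc) simp_all
    also have "... = Cp X (Cp X y cA) m1" using a' by simp
    also have "... = Cp X y (Cp X cA m1)" using a' m1 m2 cAA y w J cA by (intro p.X.assoc[symmetric]) simp_all
    also have "... = Cp X (\<alpha> J) h2" using m1 he by simp
    also have "... = Cp X (\<alpha> J) (Cp X (pa w) m2)" using m2 by simp
    also have "... = Cp X (Cp X (\<alpha> J) (pa w)) m2" using m2 w J by (intro p.X.assoc) simp_all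
    also have "... = Cp X (Cp X (qa w) (\<alpha> K)) m2" using natw by simp
    also have "... = Cp X (qa w) (Cp X (\<alpha> K) m2)" using m2 w J K_def by (intro p.X.assoc[symmetric]) simp_all
    finally show "Cp X (qa w) (Cp X a' m1) = Cp X (qa w) (Cp X (\<alpha> K) m2)" .
    show "Pa (Cp X a' m1) = Pa (Cp X (\<alpha> K) m2)" using a' m1 m2 cAA y w J cA K_def PcA by simp
  qed
  have "\<exists>!n. (n \<in> Ar X \<and> Pa n = Idt B K) \<and> Dm X n = Dm X m1 \<and> Cd X n = Dm X pa' \<and> Cp X pa' n = m1 \<and> Cp X pb' n = m2"
    apply (rule pb_U[OF pbK])
    using m1 m2 a' cAA cA PcA w J K_def hd eqa y by simp_all
  then obtain n where n: "n \<in> Ar X" "Pa n = Idt B K" "Dm X n = Dm X m1" "Cd X n = Dm X pa'" "Cp X pa' n = m1"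
     "Cp X pb' n = m2"
    and nu: "\<And>n'. (n' \<in> Ar X \<and> Pa n' = Idt B K) \<and> Dm X n' = Dm X m1 \<and> Cd X n' = Dm X pa' \<and> Cp X pa' n' = m1 \<and> Cp X pb' n' = m2 \<Longrightarrow> n' = n"
    by (elim ex1E) blast
  have pa'D: "Dm X pa' = Dm X cD" "Dm X pb' = Dm X cD" using pa' pb' P cD cDA by simp_all
  have nA: "Cp X cD n \<in> Ar X" "Dm X (Cp X cD n) = Dm X h1" "Cd X (Cp X cD n) = Dm X f"
    using n cDA cD pa'D m1 by simp_all
  have nf: "Cp X f (Cp X cD n) = h1"
  proof -
    have "Cp X f (Cp X cD n) = Cp X (Cp X f cD) n" using n cDA cD pa'D P by (intro p.X.assoc) simp_all
    also have "... = Cp X (Cp X cA pa') n" using pa' by simp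
    also have "... = Cp X cA (Cp X pa' n)" using n pa' cAA pa'D by (intro p.X.assoc[symmetric]) simp_all
    finally show ?thesis using n m1 by simp
  qed
  have ny: "Cp X y' (Cp X cD n) = h2"
  proof -
    have "Cp X y' (Cp X cD n) = Cp X (Cp X y' cD) n" using n cDA cD pa'D P by (intro p.X.assoc) simp_all
    also have "... = Cp X (Cp X (pa w) pb') n" using pb' by simp
    also have "... = Cp X (pa w) (Cp X pb' n)" using n pb' w pa'D by (intro p.X.assoc[symmetric]) simp_all
    finally show ?thesis using n m2 by simp
  qed
  show ?thesis
  proof (rule ex1I[of _ "Cp X cD n"])
    show "Cp X cD n \<in> Ar X \<and> Dm X (Cp X cD n) = Dm X h1 \<and> Cd X (Cp X cD n) = Dm X f \<and>
      Cp X f (Cp X cD n) = h1 \<and> Cp X y' (Cp X cD n) = h2" using nA nf ny by simp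
    fix l1 assume l1: "l1 \<in> Ar X \<and> Dm X l1 = Dm X h1 \<and> Cd X l1 = Dm X f \<and> Cp X f l1 = h1 \<and> Cp X y' l1 = h2"
    have "Pa h1 = Pa l1" using l1 P Pf p.B.Idt_left[of "Pa l1" J] by (metis p.P_Ar p.P_Cd p.P_Cp)
    then have "Cd X l1 = Cd X cD" "Pa l1 = Pa cD" using l1 cD unfolding w_def by simp_all
    then obtain n1 where n1: "n1 \<in> Ar X" "Dm X n1 = Dm X l1" "Cd X n1 = Dm X cD" "Cp X cD n1 = l1"
      "Pa n1 = Idt B (Po (Dm X cD))"
      using p.cart_vert[OF cD(3)] l1 by blast
    have e1: "Cp X pa' n1 = m1"
    proof (rule p.cart_uniq[OF cA(3)])
      show "Cp X pa' n1 \<in> Ar X" "m1 \<in> Ar X" using n1 pa' pa'D m1 by simp_all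
      show "Dm X (Cp X pa' n1) = Dm X m1" "Cd X (Cp X pa' n1) = Dm X cA" "Cd X m1 = Dm X cA"
        using n1 pa' pa'D m1 l1 by simp_all
      have "Cp X cA (Cp X pa' n1) = Cp X (Cp X cA pa') n1" using n1 pa' pa'D cAA by (intro p.X.assoc) simp_all
      also have "... = Cp X (Cp X f cD) n1" using pa' by simp
      also have "... = Cp X f (Cp X cD n1)" using n1 cDA cD P by (intro p.X.assoc[symmetric]) simp_all
      finally show "Cp X cA (Cp X pa' n1) = Cp X cA m1" using n1 l1 m1 by simp
      show "Pa (Cp X pa' n1) = Pa m1" using n1 pa' pa'D m1 PcA PcD w by simp
    qed
    have e2: "Cp X pb' n1 = m2"
    proof (rule p.cart_uniq[OF p.ra_cart[OF w(1)]])
      show "Cp X pb' n1 \<in> Ar X" "m2 \<in> Ar X" using n1 pb' pa'D m2 by simp_all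
      show "Dm X (Cp X pb' n1) = Dm X m2" "Cd X (Cp X pb' n1) = Dm X (pa w)" "Cd X m2 = Dm X (pa w)"
        using n1 pb' pa'D m2 l1 hd by simp_all
      have "Cp X (pa w) (Cp X pb' n1) = Cp X (Cp X (pa w) pb') n1" using n1 pb' pa'D w by (intro p.X.assoc) simp_all
      also have "... = Cp X (Cp X y' cD) n1" using pb' by simp
      also have "... = Cp X y' (Cp X cD n1)" using n1 cDA cD P by (intro p.X.assoc[symmetric]) simp_all
      finally show "Cp X (pa w) (Cp X pb' n1) = Cp X (pa w) m2" using n1 l1 m2 by simp
      show "Pa (Cp X pb' n1) = Pa m2" using n1 pb' pa'D m2 PcD w K_def by simp
    qed
    have "n1 = n"
      apply (rule nu)
      using n1 e1 e2 PcD l1 pa' pa'D m1 by simp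
    then show "l1 = Cp X cD n" using n1 by simp
  qed
qed

end


context main begin

abbreviation "Sp \<equiv> slice X B Po Pa po pa"
abbreviation "Sq \<equiv> slice X B Po Pa qo qa"

definition PBp :: "'i \<times> 'f \<Rightarrow> 'f \<times> 'f" where
  "PBp s = (SOME fx. is_pullback (fiber X B Po Pa (fst s)) (snd s) (\<alpha> (fst s)) (fst fx) (snd fx))"
definition "PF s = fst (PBp s)"
definition "PX s = snd (PBp s)"
definition "Fo s = (fst s, PX s)"
definition "PBL t h1 h2 = (THE l. l \<in> Ar X \<and> Dm X l = Dm X h1 \<and> Cd X l = Dm X (PF t) \<and> Cp X (PF t) l = h1 \<and> Cp X (PX t) l = h2)"
definition "Fa m = (Fo (fst m), (fst (fst (snd m)),
    PBL (snd (snd m)) (Cp X (snd (fst (snd m))) (PF (fst m))) (Cp X (pa (fst (fst (snd m)))) (PX (fst m)))),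
    Fo (snd (snd m)))"

lemma PB_ok:
  assumes s: "(J,y) \<in> Ob Sq"
  shows "is_pullback (fiber X B Po Pa J) y (\<alpha> J) (PF (J,y)) (PX (J,y))"
proof -
  have a: "J \<in> Ob B" "y \<in> Ar X" "Cd X y = qo J" "Pa y = Idt B J" using s by simp_all
  have hp: "has_pullbacks (fiber X B Po Pa J)" using fpb a unfolding fibered_pullbacks_def by blast
  have "y \<in> Ar (fiber X B Po Pa J)" "\<alpha> J \<in> Ar (fiber X B Po Pa J)"
    "Cd (fiber X B Po Pa J) y = Cd (fiber X B Po Pa J) (\<alpha> J)" using a by simp_all
  then obtain f x' where "is_pullback (fiber X B Po Pa J) y (\<alpha> J) f x'"
    using hp unfolding has_pullbacks_def by blast
  then have "\<exists>fx. is_pullback (fiber X B Po Pa J) y (\<alpha> J) (fst fx) (snd fx)" by (intro exI[of _ "(f,x')"]) simp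
  then have "is_pullback (fiber X B Po Pa J) y (\<alpha> J) (fst (PBp (J,y))) (snd (PBp (J,y)))"
    unfolding PBp_def fst_conv snd_conv by (rule someI_ex)
  then show ?thesis unfolding PF_def PX_def .
qed

lemma PB_E:
  assumes s: "(J,y) \<in> Ob Sq"
  shows "PF (J,y) \<in> Ar X" "PX (J,y) \<in> Ar X" "Pa (PF (J,y)) = Idt B J" "Pa (PX (J,y)) = Idt B J"
    "Cd X (PF (J,y)) = Dm X y" "Cd X (PX (J,y)) = po J" "Dm X (PF (J,y)) = Dm X (PX (J,y))"
    "Cp X y (PF (J,y)) = Cp X (\<alpha> J) (PX (J,y))"
  using pb_E[OF PB_ok[OF s]] s by simp_all

lemma Fo_Ob: "(J,y) \<in> Ob Sq \<Longrightarrow> Fo (J,y) \<in> Ob Sp"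
  using PB_E[of J y] by (simp add: Fo_def)

lemma PBL:
  assumes s: "(J,y) \<in> Ob Sq"
    and h1: "h1 \<in> Ar X" "Cd X h1 = Dm X y" and h2: "h2 \<in> Ar X" "Cd X h2 = po J"
    and hd: "Dm X h1 = Dm X h2" and he: "Cp X y h1 = Cp X (\<alpha> J) h2"
  shows "PBL (J,y) h1 h2 \<in> Ar X" "Dm X (PBL (J,y) h1 h2) = Dm X h1" "Cd X (PBL (J,y) h1 h2) = Dm X (PF (J,y))"
    "Cp X (PF (J,y)) (PBL (J,y) h1 h2) = h1" "Cp X (PX (J,y)) (PBL (J,y) h1 h2) = h2"
    and "\<And>l. l \<in> Ar X \<Longrightarrow> Dm X l = Dm X h1 \<Longrightarrow> Cd X l = Dm X (PF (J,y)) \<Longrightarrow> Cp X (PF (J,y)) l = h1 \<Longrightarrow>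
        Cp X (PX (J,y)) l = h2 \<Longrightarrow> l = PBL (J,y) h1 h2"
proof -
  have a: "J \<in> Ob B" "y \<in> Ar X" "Cd X y = qo J" "Pa y = Idt B J" using s by simp_all
  have ex: "\<exists>!l. l \<in> Ar X \<and> Dm X l = Dm X h1 \<and> Cd X l = Dm X (PF (J,y)) \<and> Cp X (PF (J,y)) l = h1 \<and> Cp X (PX (J,y)) l = h2"
    by (rule pb_univ[OF a PB_ok[OF s] h1 h2 hd he])
  have P: "PBL (J,y) h1 h2 \<in> Ar X \<and> Dm X (PBL (J,y) h1 h2) = Dm X h1 \<and> Cd X (PBL (J,y) h1 h2) = Dm X (PF (J,y)) \<and>
    Cp X (PF (J,y)) (PBL (J,y) h1 h2) = h1 \<and> Cp X (PX (J,y)) (PBL (J,y) h1 h2) = h2"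
    unfolding PBL_def by (rule theI'[OF ex])
  then show "PBL (J,y) h1 h2 \<in> Ar X" "Dm X (PBL (J,y) h1 h2) = Dm X h1" "Cd X (PBL (J,y) h1 h2) = Dm X (PF (J,y))"
    "Cp X (PF (J,y)) (PBL (J,y) h1 h2) = h1" "Cp X (PX (J,y)) (PBL (J,y) h1 h2) = h2" by simp_all
  fix l assume "l \<in> Ar X" "Dm X l = Dm X h1" "Cd X l = Dm X (PF (J,y))" "Cp X (PF (J,y)) l = h1"
        "Cp X (PX (J,y)) l = h2"
  then show "l = PBL (J,y) h1 h2" using ex P by blast
qed

end


context main begin

lemma Fa_eq: "Fa ((I,x),(u,g),(J,y)) = ((I, PX (I,x)),
   (u, PBL (J,y) (Cp X g (PF (I,x))) (Cp X (pa u) (PX (I,x)))), (J, PX (J,y)))"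
  by (simp add: Fa_def Fo_def)

lemma Fa_cone:
  assumes m: "((I,x),(u,g),(J,y)) \<in> Ar Sq"
  shows "Cp X g (PF (I,x)) \<in> Ar X" "Cd X (Cp X g (PF (I,x))) = Dm X y"
    "Cp X (pa u) (PX (I,x)) \<in> Ar X" "Cd X (Cp X (pa u) (PX (I,x))) = po J"
    "Dm X (Cp X g (PF (I,x))) = Dm X (Cp X (pa u) (PX (I,x)))"
    "Cp X y (Cp X g (PF (I,x))) = Cp X (\<alpha> J) (Cp X (pa u) (PX (I,x)))"
proof -
  note a = q.sAr_E[OF m]
  have sI: "(I,x) \<in> Ob Sq" using m by simp
  note b = PB_E[OF sI]
  show "Cp X g (PF (I,x)) \<in> Ar X" "Cd X (Cp X g (PF (I,x))) = Dm X y"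
    "Cp X (pa u) (PX (I,x)) \<in> Ar X" "Cd X (Cp X (pa u) (PX (I,x))) = po J"
    "Dm X (Cp X g (PF (I,x))) = Dm X (Cp X (pa u) (PX (I,x)))" using a b by simp_all
  have "Cp X y (Cp X g (PF (I,x))) = Cp X (Cp X y g) (PF (I,x))" using a b by (intro p.X.assoc) simp_all
  also have "... = Cp X (Cp X (qa u) x) (PF (I,x))" using a by simp
  also have "... = Cp X (qa u) (Cp X x (PF (I,x)))" using a b by (intro p.X.assoc[symmetric]) simp_all
  also have "... = Cp X (qa u) (Cp X (\<alpha> I) (PX (I,x)))" using b by simp
  also have "... = Cp X (Cp X (qa u) (\<alpha> I)) (PX (I,x))" using a b by (intro p.X.assoc) simp_all
  also have "... = Cp X (Cp X (\<alpha> J) (pa u)) (PX (I,x))" using al_nat[OF a(9)] a by simp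
  also have "... = Cp X (\<alpha> J) (Cp X (pa u) (PX (I,x)))" using a b by (intro p.X.assoc[symmetric]) simp_all
  finally show "Cp X y (Cp X g (PF (I,x))) = Cp X (\<alpha> J) (Cp X (pa u) (PX (I,x)))" .
qed

lemma Fa_k:
  assumes m: "((I,x),(u,g),(J,y)) \<in> Ar Sq"
  defines "k \<equiv> PBL (J,y) (Cp X g (PF (I,x))) (Cp X (pa u) (PX (I,x)))"
  shows "k \<in> Ar X" "Dm X k = Dm X (PF (I,x))" "Cd X k = Dm X (PF (J,y))"
    "Cp X (PF (J,y)) k = Cp X g (PF (I,x))" "Cp X (PX (J,y)) k = Cp X (pa u) (PX (I,x))"
    "Pa k = u"
    "\<And>l. l \<in> Ar X \<Longrightarrow> Dm X l = Dm X (PF (I,x)) \<Longrightarrow> Cd X l = Dm X (PF (J,y)) \<Longrightarrow>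
        Cp X (PF (J,y)) l = Cp X g (PF (I,x)) \<Longrightarrow> Cp X (PX (J,y)) l = Cp X (pa u) (PX (I,x)) \<Longrightarrow> l = k"
    "Fa ((I,x),(u,g),(J,y)) \<in> Ar Sp"
proof -
  note a = q.sAr_E[OF m]
  have sI: "(I,x) \<in> Ob Sq" and sJ: "(J,y) \<in> Ob Sq" using m by simp_all
  note b = PB_E[OF sI] and c = PB_E[OF sJ]
  note C = Fa_cone[OF m]
  note L = PBL[OF sJ C(1,2,3,4,5,6)]
  show k: "k \<in> Ar X" "Dm X k = Dm X (PF (I,x))" "Cd X k = Dm X (PF (J,y))"
    "Cp X (PF (J,y)) k = Cp X g (PF (I,x))" "Cp X (PX (J,y)) k = Cp X (pa u) (PX (I,x))"
    using L(1-5) b a unfolding k_def by simp_all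
  show "\<And>l. l \<in> Ar X \<Longrightarrow> Dm X l = Dm X (PF (I,x)) \<Longrightarrow> Cd X l = Dm X (PF (J,y)) \<Longrightarrow>
        Cp X (PF (J,y)) l = Cp X g (PF (I,x)) \<Longrightarrow> Cp X (PX (J,y)) l = Cp X (pa u) (PX (I,x)) \<Longrightarrow> l = k"
  proof -
    fix l assume l: "l \<in> Ar X" "Dm X l = Dm X (PF (I,x))" "Cd X l = Dm X (PF (J,y))"
        "Cp X (PF (J,y)) l = Cp X g (PF (I,x))" "Cp X (PX (J,y)) l = Cp X (pa u) (PX (I,x))"
    show "l = k" unfolding k_def
      by (rule L(6)) (use l b a in simp_all)
  qed
  have FA: "((I, PX (I,x)), (u, k), (J, PX (J,y))) \<in> Ar Sp"
    using k a b c by simp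
  then show "Fa ((I,x),(u,g),(J,y)) \<in> Ar Sp" unfolding Fa_eq k_def .
  show "Pa k = u" by (rule p.sAr_Pa[OF FA])
qed

end


context main begin

lemma Fstar_fun: "is_functor Sq Sp Fo Fa"
  unfolding is_functor_def
proof (intro conjI ballI impI)
  show "is_category Sq" by (rule q.S_cat)
  show "is_category Sp" by (rule p.S_cat)
  fix a assume a: "a \<in> Ob Sq"
  obtain I x where aa: "a = (I,x)" by fastforce
  show "Fo a \<in> Ob Sp" using Fo_Ob a aa by simp
  have sI: "(I,x) \<in> Ob Sq" using a aa by simp
  note b = PB_E[OF sI]
  have c: "I \<in> Ob B" "x \<in> Ar X" "Cd X x = qo I" "Pa x = Idt B I" using sI by simp_all
  have m: "((I,x),(Idt B I, Idt X (Dm X x)),(I,x)) \<in> Ar Sq" using sI c by simp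
  note K = Fa_k[OF m]
  have "Idt X (Dm X (PX (I,x))) = PBL (I,x) (Cp X (Idt X (Dm X x)) (PF (I,x))) (Cp X (pa (Idt B I)) (PX (I,x)))"
    by (rule K(7)) (use b c in simp_all)
  then show "Fa (Idt Sq a) = Idt Sp (Fo a)"
    by (simp add: aa Fa_eq Fo_def)
next
  fix m assume m: "m \<in> Ar Sq"
  obtain I x u g J y where mm: "m = ((I,x),(u,g),(J,y))" by (rule p.trip)
  have mA: "((I,x),(u,g),(J,y)) \<in> Ar Sq" using m mm by simp
  note K = Fa_k[OF mA]
  show "Fa m \<in> hom Sp (Fo (Dm Sq m)) (Fo (Cd Sq m))"
    using K(8) unfolding hom_def by (simp add: mm Fa_eq Fo_def del: p.sAr)
next
  fix m n assume m: "m \<in> Ar Sq" and n: "n \<in> Ar Sq" and e: "Cd Sq m = Dm Sq n"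
  obtain I x u g J y where mm: "m = ((I,x),(u,g),(J,y))" by (rule p.trip)
  obtain J' y' v h K z where nn: "n = ((J',y'),(v,h),(K,z))" by (rule p.trip)
  have e2: "J' = J" "y' = y" using e by (simp_all add: mm nn)
  have mA: "((I,x),(u,g),(J,y)) \<in> Ar Sq" using m mm by simp
  have nA: "((J,y),(v,h),(K,z)) \<in> Ar Sq" using n nn e2 by simp
  have cA: "((I,x),(Cp B v u, Cp X h g),(K,z)) \<in> Ar Sq" by (rule q.sCp_Ar[OF mA nA])
  note a1 = q.sAr_E[OF mA] and a2 = q.sAr_E[OF nA]
  have sI: "(I,x) \<in> Ob Sq" and sJ: "(J,y) \<in> Ob Sq" and sK: "(K,z) \<in> Ob Sq" using mA nA by simp_all
  note bI = PB_E[OF sI] and bJ = PB_E[OF sJ] and bK = PB_E[OF sK]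
  note Km = Fa_k[OF mA] and Kn = Fa_k[OF nA] and Kc = Fa_k[OF cA]
  define km where "km = PBL (J,y) (Cp X g (PF (I,x))) (Cp X (pa u) (PX (I,x)))"
  define kn where "kn = PBL (K,z) (Cp X h (PF (J,y))) (Cp X (pa v) (PX (J,y)))"
  note Km' = Km[folded km_def] and Kn' = Kn[folded kn_def]
  have "Cp X kn km = PBL (K,z) (Cp X (Cp X h g) (PF (I,x))) (Cp X (pa (Cp B v u)) (PX (I,x)))"
  proof (rule Kc(7))
    show "Cp X kn km \<in> Ar X" "Dm X (Cp X kn km) = Dm X (PF (I,x))" "Cd X (Cp X kn km) = Dm X (PF (K,z))"
      using Km'(1-5) Kn'(1-5) by simp_all
    have "Cp X (PF (K,z)) (Cp X kn km) = Cp X (Cp X (PF (K,z)) kn) km"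
      apply (rule p.X.assoc) using Km'(1,3) Kn'(1,2,3) bK(1) by simp_all
    also have "... = Cp X (Cp X h (PF (J,y))) km" using Kn'(4) by simp
    also have "... = Cp X h (Cp X (PF (J,y)) km)" 
      apply (rule p.X.assoc[symmetric]) using Km'(1,3) a2(12,13) bJ(1,5) by simp_all
    also have "... = Cp X h (Cp X g (PF (I,x)))" using Km'(4) by simp
    also have "... = Cp X (Cp X h g) (PF (I,x))"
      apply (rule p.X.assoc) using a1(12,13,14) a2(12,13) bI(1,5) by simp_all
    finally show "Cp X (PF (K,z)) (Cp X kn km) = Cp X (Cp X h g) (PF (I,x))" .
    have "Cp X (PX (K,z)) (Cp X kn km) = Cp X (Cp X (PX (K,z)) kn) km"
      apply (rule p.X.assoc) using Km'(1,3) Kn'(1,2,3) bK(2,7) by simp_all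
    also have "... = Cp X (Cp X (pa v) (PX (J,y))) km" using Kn'(5) by simp
    also have "... = Cp X (pa v) (Cp X (PX (J,y)) km)"
      apply (rule p.X.assoc[symmetric]) using Km'(1,3) a2(9,10) bJ(2,6,7) by simp_all
    also have "... = Cp X (pa v) (Cp X (pa u) (PX (I,x)))" using Km'(5) by simp
    also have "... = Cp X (Cp X (pa v) (pa u)) (PX (I,x))"
      apply (rule p.X.assoc) using a1(9,10,11) a2(9,10) bI(2,6) by simp_all
    also have "... = Cp X (pa (Cp B v u)) (PX (I,x))" using a1(9,11) a2(9,10) by (simp add: p.ra_Cp)
    finally show "Cp X (PX (K,z)) (Cp X kn km) = Cp X (pa (Cp B v u)) (PX (I,x))" .
  qed
  then show "Fa (Cp Sq n m) = Cp Sp (Fa n) (Fa m)"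
    unfolding mm nn e2 Fa_eq km_def kn_def p.sCp q.sCp by simp
qed

end


context main begin

lemma Fa_cart:
  assumes m: "((I,x),(u,g),(J,y)) \<in> Ar Sq" and cg: "cartesian X B Po Pa g"
  shows "cartesian X B Po Pa (PBL (J,y) (Cp X g (PF (I,x))) (Cp X (pa u) (PX (I,x))))"
proof -
  define k where "k = PBL (J,y) (Cp X g (PF (I,x))) (Cp X (pa u) (PX (I,x)))"
  note a = q.sAr_E[OF m]
  have sI: "(I,x) \<in> Ob Sq" and sJ: "(J,y) \<in> Ob Sq" using m by simp_all
  note bI = PB_E[OF sI] and bJ = PB_E[OF sJ]
  note K = Fa_k(1-6)[OF m, folded k_def]
  have PoF: "Po (Dm X (PF (I,x))) = I" using p.vert_Dm[OF bI(1,3) a(1)] .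
  have PoK: "Po (Dm X k) = I" using K(2) bI(1,3) a(1) p.vert_Dm by simp
  show ?thesis
    unfolding k_def[symmetric] cartesian_def
  proof (intro conjI ballI impI)
    show "k \<in> Ar X" by (rule K(1))
    fix w h assume w: "w \<in> Ar B" and h: "h \<in> Ar X"
      and c: "Cd X h = Cd X k \<and> Cd B w = Po (Dm X k) \<and> Pa h = Cp B (Pa k) w"
    have wI: "Cd B w = I" using c PoK by simp
    have Ph: "Pa h = Cp B u w" using c K(6) by simp
    have hC: "Cd X h = Dm X (PF (J,y))" using c K(3) by simp
    have t0: "Cp X (PF (J,y)) h \<in> Ar X" "Cd X (Cp X (PF (J,y)) h) = Cd X g" "Cd B w = Po (Dm X g)"
      "Pa (Cp X (PF (J,y)) h) = Cp B (Pa g) w"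
      using h hC Ph bJ(1,3,5) a(12,13,14,16,17) wI w a(9,10,11) by simp_all
    obtain t where t: "t \<in> Ar X" "Dm X t = Dm X (Cp X (PF (J,y)) h)" "Cd X t = Dm X g"
        "Cp X g t = Cp X (PF (J,y)) h" "Pa t = w"
      by (rule p.cart_lift[OF cg w t0(1,2,3,4)])
    have r0: "Cp X (PX (J,y)) h \<in> Ar X" "Cd X (Cp X (PX (J,y)) h) = Cd X (pa u)" "Cd B w = Po (Dm X (pa u))"
      "Pa (Cp X (PX (J,y)) h) = Cp B (Pa (pa u)) w"
      using h hC Ph bJ(2,4,6,7) wI w a(1,5,9,10,11) by simp_all
    obtain r where r: "r \<in> Ar X" "Dm X r = Dm X (Cp X (PX (J,y)) h)" "Cd X r = Dm X (pa u)"
        "Cp X (pa u) r = Cp X (PX (J,y)) h" "Pa r = w"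
      by (rule p.cart_lift[OF p.ra_cart[OF a(9)] w r0(1,2,3,4)])
    have t2: "Dm X t = Dm X h" using t(2) h hC bJ(1,5) by simp
    have r2: "Dm X r = Dm X h" "Cd X r = po I" using r(2,3) h hC bJ(2,6,7) a(9,10) by simp_all
    have xt: "Cp X x t = Cp X (\<alpha> I) r"
    proof (rule p.cart_uniq[OF q.ra_cart[OF a(9)]])
      show "Cp X x t \<in> Ar X" "Cp X (\<alpha> I) r \<in> Ar X" using t(1,3) r(1) r2 a(1,2,13) by simp_all
      show "Dm X (Cp X x t) = Dm X (Cp X (\<alpha> I) r)" using t(1,3) t2 r(1) r2 a(1,2,13) by simp
      show "Cd X (Cp X x t) = Dm X (qa u)" "Cd X (Cp X (\<alpha> I) r) = Dm X (qa u)"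
        using t(1,3) r(1) r2 a(1,2,3,9,10,13) by simp_all
      have "Cp X (qa u) (Cp X x t) = Cp X (Cp X (qa u) x) t"
        apply (rule p.X.assoc) using t(1,3) a(2,3,9,10,13) by simp_all
      also have "... = Cp X (Cp X y g) t" using a(15) by simp
      also have "... = Cp X y (Cp X g t)"
        apply (rule p.X.assoc[symmetric]) using t(1,3) a(6,12,14) by simp_all
      also have "... = Cp X y (Cp X (PF (J,y)) h)" using t(4) by simp
      also have "... = Cp X (Cp X y (PF (J,y))) h"
        apply (rule p.X.assoc) using h hC bJ(1,5) a(6) by simp_all
      also have "... = Cp X (Cp X (\<alpha> J) (PX (J,y))) h" using bJ(8) by simp
      also have "... = Cp X (\<alpha> J) (Cp X (PX (J,y)) h)"
        apply (rule p.X.assoc[symmetric]) using h hC bJ(2,6,7) a(5) by simp_all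
      also have "... = Cp X (\<alpha> J) (Cp X (pa u) r)" using r(4) by simp
      also have "... = Cp X (Cp X (\<alpha> J) (pa u)) r"
        apply (rule p.X.assoc) using r(1) r2 a(5,9,10,11) by simp_all
      also have "... = Cp X (Cp X (qa u) (\<alpha> I)) r" using al_nat[OF a(9)] a(10,11) by simp
      also have "... = Cp X (qa u) (Cp X (\<alpha> I) r)"
        apply (rule p.X.assoc[symmetric]) using r(1) r2 a(1,9,10) by simp_all
      finally show "Cp X (qa u) (Cp X x t) = Cp X (qa u) (Cp X (\<alpha> I) r)" .
      show "Pa (Cp X x t) = Pa (Cp X (\<alpha> I) r)" using t(1,3,5) r(1,5) r2 a(1,2,4,13) wI w by simp
    qed
    have LP: "PBL (I,x) t r \<in> Ar X" "Dm X (PBL (I,x) t r) = Dm X t" "Cd X (PBL (I,x) t r) = Dm X (PF (I,x))"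
      "Cp X (PF (I,x)) (PBL (I,x) t r) = t" "Cp X (PX (I,x)) (PBL (I,x) t r) = r"
      using PBL(1-5)[OF sI t(1) _ r(1) r2(2) _ xt] t(3) a(13) t2 r2 by simp_all
    have LU: "\<And>l. l \<in> Ar X \<Longrightarrow> Dm X l = Dm X t \<Longrightarrow> Cd X l = Dm X (PF (I,x)) \<Longrightarrow> Cp X (PF (I,x)) l = t \<Longrightarrow>
        Cp X (PX (I,x)) l = r \<Longrightarrow> l = PBL (I,x) t r"
      by (rule PBL(6)[OF sI t(1) _ r(1) r2(2) _ xt]) (use t(3) a(13) t2 r2 in simp_all)
    define l where "l = PBL (I,x) t r"
    note LP = LP[folded l_def] and LU = LU[folded l_def]
    have cJ: "Cp X (PF (J,y)) h \<in> Ar X" "Cd X (Cp X (PF (J,y)) h) = Dm X y"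
      "Cp X (PX (J,y)) h \<in> Ar X" "Cd X (Cp X (PX (J,y)) h) = po J"
      "Dm X (Cp X (PF (J,y)) h) = Dm X (Cp X (PX (J,y)) h)"
      using h hC bJ(1,2,5,6,7) by simp_all
    have cJ6: "Cp X y (Cp X (PF (J,y)) h) = Cp X (\<alpha> J) (Cp X (PX (J,y)) h)"
    proof -
      have "Cp X y (Cp X (PF (J,y)) h) = Cp X (Cp X y (PF (J,y))) h"
        apply (rule p.X.assoc) using h hC bJ(1,5) a(6) by simp_all
      also have "... = Cp X (Cp X (\<alpha> J) (PX (J,y))) h" using bJ(8) by simp
      also have "... = Cp X (\<alpha> J) (Cp X (PX (J,y)) h)"
        apply (rule p.X.assoc[symmetric]) using h hC bJ(2,6,7) a(5) by simp_all
      finally show ?thesis .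
    qed
    note U = PBL(6)[OF sJ cJ(1-5) cJ6]
    have hU: "h = PBL (J,y) (Cp X (PF (J,y)) h) (Cp X (PX (J,y)) h)"
      by (rule U) (use h hC bJ(1) in simp_all)
    have klU: "Cp X k l = PBL (J,y) (Cp X (PF (J,y)) h) (Cp X (PX (J,y)) h)"
    proof (rule U)
      show "Cp X k l \<in> Ar X" "Dm X (Cp X k l) = Dm X (Cp X (PF (J,y)) h)" "Cd X (Cp X k l) = Dm X (PF (J,y))"
        using K(1,2,3) LP(1,2,3) t2 h hC bJ(1,5) by simp_all
      have "Cp X (PF (J,y)) (Cp X k l) = Cp X (Cp X (PF (J,y)) k) l"
        apply (rule p.X.assoc) using K(1,2,3) LP(1,2,3) bJ(1) by simp_all
      also have "... = Cp X (Cp X g (PF (I,x))) l" using K(4) by simp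
      also have "... = Cp X g (Cp X (PF (I,x)) l)"
        apply (rule p.X.assoc[symmetric]) using LP(1,3) bI(1,5) a(12,13) by simp_all
      also have "... = Cp X (PF (J,y)) h" using LP(4) t(4) by simp
      finally show "Cp X (PF (J,y)) (Cp X k l) = Cp X (PF (J,y)) h" .
      have "Cp X (PX (J,y)) (Cp X k l) = Cp X (Cp X (PX (J,y)) k) l"
        apply (rule p.X.assoc) using K(1,2,3) LP(1,2,3) bJ(2,7) by simp_all
      also have "... = Cp X (Cp X (pa u) (PX (I,x))) l" using K(5) by simp
      also have "... = Cp X (pa u) (Cp X (PX (I,x)) l)"
        apply (rule p.X.assoc[symmetric]) using LP(1,3) bI(2,6,7) a(9,10) by simp_all
      also have "... = Cp X (PX (J,y)) h" using LP(5) r(4) by simp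
      finally show "Cp X (PX (J,y)) (Cp X k l) = Cp X (PX (J,y)) h" .
    qed
    have kl: "Cp X k l = h" using hU klU by simp
    have Pl: "Pa l = w"
    proof -
      have "Pa (Cp X (PF (I,x)) l) = Cp B (Pa (PF (I,x))) (Pa l)" using LP(1,3) bI(1) by simp
      also have "... = Pa l" using LP(1,3) bI(1,3,5) a(1,17) PoF by simp
      finally show ?thesis using LP(4) t(5) by simp
    qed
    show "\<exists>!l. l \<in> Ar X \<and> Dm X l = Dm X h \<and> Cd X l = Dm X k \<and> Cp X k l = h \<and> Pa l = w"
    proof (rule ex1I[of _ l])
      show "l \<in> Ar X \<and> Dm X l = Dm X h \<and> Cd X l = Dm X k \<and> Cp X k l = h \<and> Pa l = w"
        using LP(1,2,3) t2 K(2) bI(7) kl Pl by simp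
      fix l1 assume l1: "l1 \<in> Ar X \<and> Dm X l1 = Dm X h \<and> Cd X l1 = Dm X k \<and> Cp X k l1 = h \<and> Pa l1 = w"
      have l1d: "Cd X l1 = Dm X (PF (I,x))" using l1 K(2) by simp
      have e1: "Cp X (PF (I,x)) l1 = t"
      proof (rule p.cart_uniq[OF cg])
        show "Cp X (PF (I,x)) l1 \<in> Ar X" "t \<in> Ar X" using l1 l1d bI(1) t(1) by simp_all
        show "Dm X (Cp X (PF (I,x)) l1) = Dm X t" "Cd X (Cp X (PF (I,x)) l1) = Dm X g" "Cd X t = Dm X g"
          using l1 l1d bI(1,5) t(3) t2 a(13) by simp_all
        have "Cp X g (Cp X (PF (I,x)) l1) = Cp X (Cp X g (PF (I,x))) l1"
          apply (rule p.X.assoc) using l1 l1d bI(1,5) a(12,13) by simp_all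
        also have "... = Cp X (Cp X (PF (J,y)) k) l1" using K(4) by simp
        also have "... = Cp X (PF (J,y)) (Cp X k l1)"
          apply (rule p.X.assoc[symmetric]) using l1 K(1,2,3) bJ(1) by simp_all
        finally show "Cp X g (Cp X (PF (I,x)) l1) = Cp X g t" using l1 t(4) by simp
        have "Pa (Cp X (PF (I,x)) l1) = Cp B (Pa (PF (I,x))) (Pa l1)" using l1 l1d bI(1) by simp
        also have "... = Pa l1" using l1 l1d bI(1,3,5) a(1,17) PoF w wI by simp
        finally show "Pa (Cp X (PF (I,x)) l1) = Pa t" using l1 t(5) by simp
      qed
      have e2: "Cp X (PX (I,x)) l1 = r"
      proof (rule p.cart_uniq[OF p.ra_cart[OF a(9)]])
        show "Cp X (PX (I,x)) l1 \<in> Ar X" "r \<in> Ar X" using l1 l1d bI(2,7) r(1) by simp_all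
        show "Dm X (Cp X (PX (I,x)) l1) = Dm X r" "Cd X (Cp X (PX (I,x)) l1) = Dm X (pa u)" "Cd X r = Dm X (pa u)"
          using l1 l1d bI(2,6,7) r(3) r2 a(9,10) by simp_all
        have "Cp X (pa u) (Cp X (PX (I,x)) l1) = Cp X (Cp X (pa u) (PX (I,x))) l1"
          apply (rule p.X.assoc) using l1 l1d bI(2,6,7) a(9,10) by simp_all
        also have "... = Cp X (Cp X (PX (J,y)) k) l1" using K(5) by simp
        also have "... = Cp X (PX (J,y)) (Cp X k l1)"
          apply (rule p.X.assoc[symmetric]) using l1 K(1,2,3) bJ(2,7) by simp_all
        finally show "Cp X (pa u) (Cp X (PX (I,x)) l1) = Cp X (pa u) r" using l1 r(4) by simp
        have "Pa (Cp X (PX (I,x)) l1) = Cp B (Pa (PX (I,x))) (Pa l1)" using l1 l1d bI(2,7) by simp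
        also have "... = Pa l1" using l1 l1d bI(1,2,4,5,7) a(1,17) PoF w wI by simp
        finally show "Pa (Cp X (PX (I,x)) l1) = Pa r" using l1 r(5) by simp
      qed
      show "l1 = l" by (rule LU) (use l1 l1d e1 e2 t2 in simp_all)
    qed
  qed
qed

end


context main begin

lemma sig_eq: "sigma_o X \<alpha> (I,x) = (I, Cp X (\<alpha> I) x)"
  "sigma_a X \<alpha> ((I,x),(u,f),(J,y)) = ((I, Cp X (\<alpha> I) x),(u,f),(J, Cp X (\<alpha> J) y))"
  by (simp_all add: sigma_a_def sigma_o_def)

lemma sig_Ob: assumes "(I,x) \<in> Ob Sp" shows "sigma_o X \<alpha> (I,x) \<in> Ob Sq"
proof -
  have a: "I \<in> Ob B" "x \<in> Ar X" "Cd X x = po I" "Pa x = Idt B I" using assms by simp_all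
  show ?thesis using a by (simp add: sig_eq)
qed

lemma sig_Ar: assumes m: "((I,x),(u,f),(J,y)) \<in> Ar Sp" shows "sigma_a X \<alpha> ((I,x),(u,f),(J,y)) \<in> Ar Sq"
proof -
  note a = p.sAr_E[OF m]
  have "Cp X (Cp X (\<alpha> J) y) f = Cp X (\<alpha> J) (Cp X y f)"
    apply (rule p.X.assoc[symmetric]) using a(5,6,7,12,14) by simp_all
  also have "... = Cp X (\<alpha> J) (Cp X (pa u) x)" using a(15) by simp
  also have "... = Cp X (Cp X (\<alpha> J) (pa u)) x"
    apply (rule p.X.assoc) using a(2,3,5,9,10,11) by simp_all
  also have "... = Cp X (Cp X (qa u) (\<alpha> I)) x" using al_nat[OF a(9)] a(10,11) by simp
  also have "... = Cp X (qa u) (Cp X (\<alpha> I) x)"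
    apply (rule p.X.assoc[symmetric]) using a(1,2,3,9,10) by simp_all
  finally have e: "Cp X (Cp X (\<alpha> J) y) f = Cp X (qa u) (Cp X (\<alpha> I) x)" .
  show ?thesis using a e by (simp add: sig_eq)
qed

lemma sig_fibered: "fibered_functor B Sp slice_proj_o slice_proj_a Sq slice_proj_o slice_proj_a
                       (sigma_o X \<alpha>) (sigma_a X \<alpha>)"
  unfolding fibered_functor_def
proof (intro conjI ballI impI)
  show "is_fibration Sp B slice_proj_o slice_proj_a" by (rule p.S_fib)
  show "is_fibration Sq B slice_proj_o slice_proj_a" by (rule q.S_fib)
  show "is_functor Sp Sq (sigma_o X \<alpha>) (sigma_a X \<alpha>)"
    unfolding is_functor_def
  proof (intro conjI ballI impI)
    show "is_category Sp" by (rule p.S_cat)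
    show "is_category Sq" by (rule q.S_cat)
    fix a assume a: "a \<in> Ob Sp"
    obtain I x where aa: "a = (I,x)" by fastforce
    show "sigma_o X \<alpha> a \<in> Ob Sq" using sig_Ob a aa by simp
    have c: "I \<in> Ob B" "x \<in> Ar X" "Cd X x = po I" using a aa by simp_all
    show "sigma_a X \<alpha> (Idt Sp a) = Idt Sq (sigma_o X \<alpha> a)"
      using c by (simp add: aa sig_eq)
  next
    fix m assume m: "m \<in> Ar Sp"
    obtain I x u g J y where mm: "m = ((I,x),(u,g),(J,y))" by (rule p.trip)
    show "sigma_a X \<alpha> m \<in> hom Sq (sigma_o X \<alpha> (Dm Sp m)) (sigma_o X \<alpha> (Cd Sp m))"
      using sig_Ar[of I x u g J y] m unfolding hom_def by (simp add: mm sig_eq del: p.sAr q.sAr)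
  next
    fix m n assume m: "m \<in> Ar Sp" and n: "n \<in> Ar Sp" and e: "Cd Sp m = Dm Sp n"
    obtain I x u g J y where mm: "m = ((I,x),(u,g),(J,y))" by (rule p.trip)
    obtain J' y' v h K z where nn: "n = ((J',y'),(v,h),(K,z))" by (rule p.trip)
    have e2: "J' = J" "y' = y" using e by (simp_all add: mm nn)
    show "sigma_a X \<alpha> (Cp Sp n m) = Cp Sq (sigma_a X \<alpha> n) (sigma_a X \<alpha> m)"
      by (simp add: mm nn e2 sig_eq)
  qed
next
  fix a assume "a \<in> Ob Sp"
  show "slice_proj_o (sigma_o X \<alpha> a) = slice_proj_o a" by (simp add: sigma_o_def slice_proj_o_def)
next
  fix m assume "m \<in> Ar Sp"
  show "slice_proj_a (sigma_a X \<alpha> m) = slice_proj_a m" by (simp add: sigma_a_def slice_proj_a_def)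
next
  fix m assume m: "m \<in> Ar Sp" and c: "cartesian Sp B slice_proj_o slice_proj_a m"
  obtain I x u g J y where mm: "m = ((I,x),(u,g),(J,y))" by (rule p.trip)
  have mA: "((I,x),(u,g),(J,y)) \<in> Ar Sp" using m mm by simp
  have cg: "cartesian X B Po Pa g" using c p.S_cart_iff[OF mA] mm by simp
  have sA: "((I, Cp X (\<alpha> I) x),(u,g),(J, Cp X (\<alpha> J) y)) \<in> Ar Sq" using sig_Ar[OF mA] by (simp add: sig_eq del: q.sAr)
  show "cartesian Sq B slice_proj_o slice_proj_a (sigma_a X \<alpha> m)"
    using q.S_cart_iff[OF sA] cg by (simp add: mm sig_eq)
qed

lemma Fstar_fibered: "fibered_functor B Sq slice_proj_o slice_proj_a Sp slice_proj_o slice_proj_a Fo Fa"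
  unfolding fibered_functor_def
proof (intro conjI ballI impI)
  show "is_fibration Sp B slice_proj_o slice_proj_a" by (rule p.S_fib)
  show "is_fibration Sq B slice_proj_o slice_proj_a" by (rule q.S_fib)
  show "is_functor Sq Sp Fo Fa" by (rule Fstar_fun)
next
  fix a assume "a \<in> Ob Sq"
  show "slice_proj_o (Fo a) = slice_proj_o a" by (simp add: Fo_def slice_proj_o_def)
next
  fix m assume "m \<in> Ar Sq"
  show "slice_proj_a (Fa m) = slice_proj_a m" by (simp add: Fa_def slice_proj_a_def)
next
  fix m assume m: "m \<in> Ar Sq" and c: "cartesian Sq B slice_proj_o slice_proj_a m"
  obtain I x u g J y where mm: "m = ((I,x),(u,g),(J,y))" by (rule p.trip)
  have mA: "((I,x),(u,g),(J,y)) \<in> Ar Sq" using m mm by simp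
  have cg: "cartesian X B Po Pa g" using c q.S_cart_iff[OF mA] mm by simp
  have FA: "((I, PX (I,x)), (u, PBL (J,y) (Cp X g (PF (I,x))) (Cp X (pa u) (PX (I,x)))), (J, PX (J,y))) \<in> Ar Sp"
    using Fa_k(8)[OF mA] by (simp only: Fa_eq)
  show "cartesian Sp B slice_proj_o slice_proj_a (Fa m)"
    unfolding mm Fa_eq using p.S_cart_iff[OF FA] Fa_cart[OF mA cg] by simp
qed

lemma Fo_pb: "\<forall>s\<in>Ob Sq. \<exists>x' f. Fo s = (fst s, x') \<and> is_pullback (fiber X B Po Pa (fst s)) (snd s) (\<alpha> (fst s)) f x'"
proof
  fix s assume s: "s \<in> Ob Sq"
  obtain J y where ss: "s = (J,y)" by fastforce
  show "\<exists>x' f. Fo s = (fst s, x') \<and> is_pullback (fiber X B Po Pa (fst s)) (snd s) (\<alpha> (fst s)) f x'"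
    using PB_ok[of J y] s ss by (auto simp: Fo_def)
qed

end


context main begin

definition "eta a = (a, (Idt B (fst a), PBL (sigma_o X \<alpha> a) (Idt X (Dm X (snd a))) (snd a)), Fo (sigma_o X \<alpha> a))"
definition "eps b = (sigma_o X \<alpha> (Fo b), (Idt B (fst b), PF b), b)"

lemma eta_facts:
  assumes a: "(I,x) \<in> Ob Sp"
  defines "m \<equiv> PBL (I, Cp X (\<alpha> I) x) (Idt X (Dm X x)) x"
  shows "eta (I,x) = ((I,x),(Idt B I, m),(I, PX (I, Cp X (\<alpha> I) x)))"
    "m \<in> Ar X" "Dm X m = Dm X x" "Cd X m = Dm X (PF (I, Cp X (\<alpha> I) x))"
    "Cp X (PF (I, Cp X (\<alpha> I) x)) m = Idt X (Dm X x)" "Cp X (PX (I, Cp X (\<alpha> I) x)) m = x"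
    "eta (I,x) \<in> Ar Sp"
proof -
  have c: "I \<in> Ob B" "x \<in> Ar X" "Cd X x = po I" "Pa x = Idt B I" using a by simp_all
  have s: "(I, Cp X (\<alpha> I) x) \<in> Ob Sq" using sig_Ob[OF a] by (simp add: sig_eq del: q.sOb)
  note b = PB_E[OF s]
  have cone: "Idt X (Dm X x) \<in> Ar X" "Cd X (Idt X (Dm X x)) = Dm X (Cp X (\<alpha> I) x)" "x \<in> Ar X" "Cd X x = po I"
    "Dm X (Idt X (Dm X x)) = Dm X x" "Cp X (Cp X (\<alpha> I) x) (Idt X (Dm X x)) = Cp X (\<alpha> I) x"
    using c by simp_all
  note L = PBL(1-5)[OF s cone(1-4) cone(5) cone(6)]
  show "eta (I,x) = ((I,x),(Idt B I, m),(I, PX (I, Cp X (\<alpha> I) x)))"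
    by (simp add: eta_def m_def sig_eq Fo_def)
  show M: "m \<in> Ar X" "Dm X m = Dm X x" "Cd X m = Dm X (PF (I, Cp X (\<alpha> I) x))"
    "Cp X (PF (I, Cp X (\<alpha> I) x)) m = Idt X (Dm X x)" "Cp X (PX (I, Cp X (\<alpha> I) x)) m = x"
    using L c unfolding m_def by simp_all
  have "((I,x),(Idt B I, m),(I, PX (I, Cp X (\<alpha> I) x))) \<in> Ar Sp"
    using M c b by simp
  then show "eta (I,x) \<in> Ar Sp" by (simp add: eta_def m_def sig_eq Fo_def del: p.sAr)
qed

lemma eps_facts:
  assumes s: "(J,y) \<in> Ob Sq"
  shows "eps (J,y) = ((J, Cp X (\<alpha> J) (PX (J,y))),(Idt B J, PF (J,y)),(J,y))"
    "eps (J,y) \<in> Ar Sq"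
proof -
  have c: "J \<in> Ob B" "y \<in> Ar X" "Cd X y = qo J" "Pa y = Idt B J" using s by simp_all
  note b = PB_E[OF s]
  show e: "eps (J,y) = ((J, Cp X (\<alpha> J) (PX (J,y))),(Idt B J, PF (J,y)),(J,y))"
    by (simp add: eps_def sig_eq Fo_def)
  have "((J, Cp X (\<alpha> J) (PX (J,y))),(Idt B J, PF (J,y)),(J,y)) \<in> Ar Sq"
    using b c by simp
  then show "eps (J,y) \<in> Ar Sq" using e by simp
qed

end


context main begin

lemma adj1: "\<forall>a\<in>Ob Sp. eta a \<in> hom Sp a (Fo (sigma_o X \<alpha> a)) \<and> slice_proj_a (eta a) = Idt B (slice_proj_o a)"
proof
  fix a assume a: "a \<in> Ob Sp"
  obtain I x where aa: "a = (I,x)" by fastforce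
  have aI: "(I,x) \<in> Ob Sp" using a aa by simp
  note E = eta_facts[OF aI]
  show "eta a \<in> hom Sp a (Fo (sigma_o X \<alpha> a)) \<and> slice_proj_a (eta a) = Idt B (slice_proj_o a)"
    using E(7) unfolding aa hom_def E(1)
    by (simp add: slice_proj_a_def slice_proj_o_def sig_eq Fo_def del: p.sAr)
qed

lemma adj3: "\<forall>b\<in>Ob Sq. eps b \<in> hom Sq (sigma_o X \<alpha> (Fo b)) b \<and> slice_proj_a (eps b) = Idt B (slice_proj_o b)"
proof
  fix b assume b: "b \<in> Ob Sq"
  obtain J y where bb: "b = (J,y)" by fastforce
  have bJ: "(J,y) \<in> Ob Sq" using b bb by simp
  note E = eps_facts[OF bJ]
  show "eps b \<in> hom Sq (sigma_o X \<alpha> (Fo b)) b \<and> slice_proj_a (eps b) = Idt B (slice_proj_o b)"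
    using E(2) unfolding bb hom_def E(1)
    by (simp add: slice_proj_a_def slice_proj_o_def sig_eq Fo_def del: q.sAr)
qed

lemma adj4: "\<forall>m\<in>Ar Sq. Cp Sq m (eps (Dm Sq m)) = Cp Sq (eps (Cd Sq m)) (sigma_a X \<alpha> (Fa m))"
proof
  fix m assume m: "m \<in> Ar Sq"
  obtain I x u g J y where mm: "m = ((I,x),(u,g),(J,y))" by (rule p.trip)
  have mA: "((I,x),(u,g),(J,y)) \<in> Ar Sq" using m mm by simp
  have sI: "(I,x) \<in> Ob Sq" and sJ: "(J,y) \<in> Ob Sq" using mA by simp_all
  note a = q.sAr_E[OF mA] and K = Fa_k(1-6)[OF mA]
  have "Cp X g (PF (I,x)) = Cp X (PF (J,y)) (PBL (J,y) (Cp X g (PF (I,x))) (Cp X (pa u) (PX (I,x))))"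
    using K(4) by simp
  then show "Cp Sq m (eps (Dm Sq m)) = Cp Sq (eps (Cd Sq m)) (sigma_a X \<alpha> (Fa m))"
    using a(1,5,9,10,11) unfolding mm by (simp add: eps_facts(1)[OF sI] eps_facts(1)[OF sJ] Fa_eq sig_eq)
qed

lemma adj5: "\<forall>a\<in>Ob Sp. Cp Sq (eps (sigma_o X \<alpha> a)) (sigma_a X \<alpha> (eta a)) = Idt Sq (sigma_o X \<alpha> a)"
proof
  fix a assume a: "a \<in> Ob Sp"
  obtain I x where aa: "a = (I,x)" by fastforce
  have aI: "(I,x) \<in> Ob Sp" using a aa by simp
  have c: "I \<in> Ob B" "x \<in> Ar X" "Cd X x = po I" using aI by simp_all
  have s: "(I, Cp X (\<alpha> I) x) \<in> Ob Sq" using sig_Ob[OF aI] by (simp add: sig_eq del: q.sOb)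
  note E = eta_facts[OF aI]
  show "Cp Sq (eps (sigma_o X \<alpha> a)) (sigma_a X \<alpha> (eta a)) = Idt Sq (sigma_o X \<alpha> a)"
    unfolding aa E(1) using E(5) c by (simp add: sig_eq eps_facts(1)[OF s])
qed

lemma adj2: "\<forall>m\<in>Ar Sp. Cp Sp (Fa (sigma_a X \<alpha> m)) (eta (Dm Sp m)) = Cp Sp (eta (Cd Sp m)) m"
proof
  fix m assume m: "m \<in> Ar Sp"
  obtain I x u g J y where mm: "m = ((I,x),(u,g),(J,y))" by (rule p.trip)
  have mA: "((I,x),(u,g),(J,y)) \<in> Ar Sp" using m mm by simp
  note a = p.sAr_E[OF mA]
  have aI: "(I,x) \<in> Ob Sp" and aJ: "(J,y) \<in> Ob Sp" using mA by simp_all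
  have sA: "((I, Cp X (\<alpha> I) x),(u,g),(J, Cp X (\<alpha> J) y)) \<in> Ar Sq"
    using sig_Ar[OF mA] by (simp add: sig_eq del: q.sAr)
  have sI: "(I, Cp X (\<alpha> I) x) \<in> Ob Sq" and sJ: "(J, Cp X (\<alpha> J) y) \<in> Ob Sq" using sA by simp_all
  note bI = PB_E[OF sI] and bJ = PB_E[OF sJ]
  note K = Fa_k(1-5)[OF sA]
  note EI = eta_facts[OF aI] and EJ = eta_facts[OF aJ]
  define k where "k = PBL (J, Cp X (\<alpha> J) y) (Cp X g (PF (I, Cp X (\<alpha> I) x))) (Cp X (pa u) (PX (I, Cp X (\<alpha> I) x)))"
  define mI where "mI = PBL (I, Cp X (\<alpha> I) x) (Idt X (Dm X x)) x"
  define mJ where "mJ = PBL (J, Cp X (\<alpha> J) y) (Idt X (Dm X y)) y"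
  note K = K[folded k_def] and EI = EI[folded mI_def] and EJ = EJ[folded mJ_def]
  have cone: "g \<in> Ar X" "Cd X g = Dm X (Cp X (\<alpha> J) y)" "Cp X (pa u) x \<in> Ar X" "Cd X (Cp X (pa u) x) = po J"
    "Dm X g = Dm X (Cp X (pa u) x)"
    using a by simp_all
  have cone6: "Cp X (Cp X (\<alpha> J) y) g = Cp X (\<alpha> J) (Cp X (pa u) x)"
  proof -
    have "Cp X (Cp X (\<alpha> J) y) g = Cp X (\<alpha> J) (Cp X y g)"
      apply (rule p.X.assoc[symmetric]) using a(5,6,7,12,14) by simp_all
    then show ?thesis using a(15) by simp
  qed
  note U = PBL(6)[OF sJ cone cone6]
  have e1: "Cp X k mI = PBL (J, Cp X (\<alpha> J) y) g (Cp X (pa u) x)"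
  proof (rule U)
    show "Cp X k mI \<in> Ar X" "Dm X (Cp X k mI) = Dm X g" "Cd X (Cp X k mI) = Dm X (PF (J, Cp X (\<alpha> J) y))"
      using K(1,2,3) EI(2,3,4) a(13) bI(7) by simp_all
    have "Cp X (PF (J, Cp X (\<alpha> J) y)) (Cp X k mI) = Cp X (Cp X (PF (J, Cp X (\<alpha> J) y)) k) mI"
      apply (rule p.X.assoc) using K(1,2,3) EI(2,3,4) bJ(1) by simp_all
    also have "... = Cp X (Cp X g (PF (I, Cp X (\<alpha> I) x))) mI" using K(4) by simp
    also have "... = Cp X g (Cp X (PF (I, Cp X (\<alpha> I) x)) mI)"
      apply (rule p.X.assoc[symmetric]) using EI(2,4) bI(1,5) a(1,2,3,12,13) by simp_all
    also have "... = g" using EI(5) a(12,13) by simp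
    finally show "Cp X (PF (J, Cp X (\<alpha> J) y)) (Cp X k mI) = g" .
    have "Cp X (PX (J, Cp X (\<alpha> J) y)) (Cp X k mI) = Cp X (Cp X (PX (J, Cp X (\<alpha> J) y)) k) mI"
      apply (rule p.X.assoc) using K(1,2,3) EI(2,3,4) bJ(2,7) by simp_all
    also have "... = Cp X (Cp X (pa u) (PX (I, Cp X (\<alpha> I) x))) mI" using K(5) by simp
    also have "... = Cp X (pa u) (Cp X (PX (I, Cp X (\<alpha> I) x)) mI)"
      apply (rule p.X.assoc[symmetric]) using EI(2,4) bI(2,6,7) a(9,10) by simp_all
    also have "... = Cp X (pa u) x" using EI(6) by simp
    finally show "Cp X (PX (J, Cp X (\<alpha> J) y)) (Cp X k mI) = Cp X (pa u) x" .
  qed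
  have e2: "Cp X mJ g = PBL (J, Cp X (\<alpha> J) y) g (Cp X (pa u) x)"
  proof (rule U)
    show "Cp X mJ g \<in> Ar X" "Dm X (Cp X mJ g) = Dm X g" "Cd X (Cp X mJ g) = Dm X (PF (J, Cp X (\<alpha> J) y))"
      using EJ(2,3,4) a(12,14) by simp_all
    have "Cp X (PF (J, Cp X (\<alpha> J) y)) (Cp X mJ g) = Cp X (Cp X (PF (J, Cp X (\<alpha> J) y)) mJ) g"
      apply (rule p.X.assoc) using EJ(2,3,4) bJ(1) a(12,14) by simp_all
    also have "... = g" using EJ(5) a(12,14) by simp
    finally show "Cp X (PF (J, Cp X (\<alpha> J) y)) (Cp X mJ g) = g" .
    have "Cp X (PX (J, Cp X (\<alpha> J) y)) (Cp X mJ g) = Cp X (Cp X (PX (J, Cp X (\<alpha> J) y)) mJ) g"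
      apply (rule p.X.assoc) using EJ(2,3,4) bJ(2,7) a(12,14) by simp_all
    also have "... = Cp X (pa u) x" using EJ(6) a(15) by simp
    finally show "Cp X (PX (J, Cp X (\<alpha> J) y)) (Cp X mJ g) = Cp X (pa u) x" .
  qed
  have e: "Cp X k mI = Cp X mJ g" using e1 e2 by simp
  show "Cp Sp (Fa (sigma_a X \<alpha> m)) (eta (Dm Sp m)) = Cp Sp (eta (Cd Sp m)) m"
    unfolding mm using e a(1,5,9,10,11) EI(1) EJ(1)
    by (simp add: sig_eq Fa_eq k_def[symmetric])
qed

lemma adj6: "\<forall>b\<in>Ob Sq. Cp Sp (Fa (eps b)) (eta (Fo b)) = Idt Sp (Fo b)"
proof
  fix b assume b: "b \<in> Ob Sq"
  obtain J y where bb: "b = (J,y)" by fastforce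
  have sJ: "(J,y) \<in> Ob Sq" using b bb by simp
  have c: "J \<in> Ob B" "y \<in> Ar X" "Cd X y = qo J" "Pa y = Idt B J" using sJ by simp_all
  note bJ = PB_E[OF sJ]
  define y' where "y' = PX (J,y)"
  have FoO: "(J, y') \<in> Ob Sp" using Fo_Ob[OF sJ] by (simp add: Fo_def y'_def)
  have s': "(J, Cp X (\<alpha> J) y') \<in> Ob Sq" using sig_Ob[OF FoO] by (simp add: sig_eq del: q.sOb)
  note b' = PB_E[OF s']
  note E = eta_facts[OF FoO]
  define m' where "m' = PBL (J, Cp X (\<alpha> J) y') (Idt X (Dm X y')) y'"
  note E = E[folded m'_def]
  have epsA: "((J, Cp X (\<alpha> J) y'),(Idt B J, PF (J,y)),(J,y)) \<in> Ar Sq"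
    using eps_facts[OF sJ] by (simp add: y'_def del: q.sAr)
  note K = Fa_k(1-5)[OF epsA]
  define k' where "k' = PBL (J,y) (Cp X (PF (J,y)) (PF (J, Cp X (\<alpha> J) y'))) (Cp X (pa (Idt B J)) (PX (J, Cp X (\<alpha> J) y')))"
  note K = K[folded k'_def]
  have cone: "PF (J,y) \<in> Ar X" "Cd X (PF (J,y)) = Dm X y" "y' \<in> Ar X" "Cd X y' = po J"
    "Dm X (PF (J,y)) = Dm X y'" "Cp X y (PF (J,y)) = Cp X (\<alpha> J) y'"
    using bJ unfolding y'_def by simp_all
  note U = PBL(6)[OF sJ cone]
  have e1: "Cp X k' m' = PBL (J,y) (PF (J,y)) y'"
  proof (rule U)
    show "Cp X k' m' \<in> Ar X" "Dm X (Cp X k' m') = Dm X (PF (J,y))" "Cd X (Cp X k' m') = Dm X (PF (J,y))"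
      using K(1,2,3) E(2,3,4) cone(5) by simp_all
    have "Cp X (PF (J,y)) (Cp X k' m') = Cp X (Cp X (PF (J,y)) k') m'"
      apply (rule p.X.assoc) using K(1,2,3) E(2,3,4) bJ(1) by simp_all
    also have "... = Cp X (Cp X (PF (J,y)) (PF (J, Cp X (\<alpha> J) y'))) m'" using K(4) by simp
    also have "... = Cp X (PF (J,y)) (Cp X (PF (J, Cp X (\<alpha> J) y')) m')"
      apply (rule p.X.assoc[symmetric]) using E(2,4) b'(1,5) bJ(1) c(1) cone(3,4,5) by simp_all
    also have "... = PF (J,y)" using E(5) cone(1,5) by simp
    finally show "Cp X (PF (J,y)) (Cp X k' m') = PF (J,y)" .
    have "Cp X (PX (J,y)) (Cp X k' m') = Cp X (Cp X (PX (J,y)) k') m'"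
      apply (rule p.X.assoc) using K(1,2,3) E(2,3,4) cone(3,5) unfolding y'_def by simp_all
    also have "... = Cp X (Cp X (pa (Idt B J)) (PX (J, Cp X (\<alpha> J) y'))) m'" using K(5) by simp
    also have "... = Cp X (PX (J, Cp X (\<alpha> J) y')) m'" using b'(2,6) c(1) by simp
    also have "... = y'" using E(6) by simp
    finally show "Cp X (PX (J,y)) (Cp X k' m') = y'" .
  qed
  have e2: "Idt X (Dm X y') = PBL (J,y) (PF (J,y)) y'"
    by (rule U) (use cone in \<open>simp_all add: y'_def\<close>)
  have e: "Cp X k' m' = Idt X (Dm X y')" using e1 e2 by simp
  have Fe: "Fa (eps (J,y)) = ((J, PX (J, Cp X (\<alpha> J) y')), (Idt B J, k'), (J, y'))"
    using eps_facts(1)[OF sJ] by (simp add: Fa_eq k'_def y'_def)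
  show "Cp Sp (Fa (eps b)) (eta (Fo b)) = Idt Sp (Fo b)"
    unfolding bb using E(1) Fe e c(1) by (simp add: Fo_def y'_def[symmetric])
qed

end


context main begin

lemma main_result:
    "fibered_functor B (slice X B Po Pa po pa) slice_proj_o slice_proj_a
                       (slice X B Po Pa qo qa) slice_proj_o slice_proj_a
                       (sigma_o X \<alpha>) (sigma_a X \<alpha>)
     \<and> (\<exists>Fo Fa.
          (\<forall>s\<in>Ob (slice X B Po Pa qo qa).
              \<exists>x' f. Fo s = (fst s, x') \<and>
                     is_pullback (fiber X B Po Pa (fst s)) (snd s) (\<alpha> (fst s)) f x') \<and>
          fibered_functor B (slice X B Po Pa qo qa) slice_proj_o slice_proj_a
                            (slice X B Po Pa po pa) slice_proj_o slice_proj_a Fo Fa \<and>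
          fibered_adjunction B (slice X B Po Pa po pa) slice_proj_o slice_proj_a
                               (slice X B Po Pa qo qa) slice_proj_o slice_proj_a
                               (sigma_o X \<alpha>) (sigma_a X \<alpha>) Fo Fa)"
proof (intro conjI exI)
  show "fibered_functor B Sp slice_proj_o slice_proj_a Sq slice_proj_o slice_proj_a (sigma_o X \<alpha>) (sigma_a X \<alpha>)"
    by (rule sig_fibered)
  show "\<forall>s\<in>Ob Sq. \<exists>x' f. Fo s = (fst s, x') \<and> is_pullback (fiber X B Po Pa (fst s)) (snd s) (\<alpha> (fst s)) f x'"
    by (rule Fo_pb)
  show "fibered_functor B Sq slice_proj_o slice_proj_a Sp slice_proj_o slice_proj_a Fo Fa"
    by (rule Fstar_fibered)
  show "fibered_adjunction B Sp slice_proj_o slice_proj_a Sq slice_proj_o slice_proj_a (sigma_o X \<alpha>) (sigma_a X \<alpha>) Fo Fa"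
    unfolding fibered_adjunction_def
    using sig_fibered Fstar_fibered adj1 adj2 adj3 adj4 adj5 adj6 by blast
qed

end

theorem mainTheorem4:
  fixes X :: "('x, 'f) cat" and B :: "('i, 'u) cat"
    and Po :: "'x \<Rightarrow> 'i" and Pa :: "'f \<Rightarrow> 'u"
    and po qo :: "'i \<Rightarrow> 'x" and pa qa :: "'u \<Rightarrow> 'f"
    and \<alpha> :: "'i \<Rightarrow> 'f"
  assumes fib: "is_fibration X B Po Pa"
    and fpb: "fibered_pullbacks X B Po Pa"
    and pp: "is_pointed X B Po Pa po pa"
    and pq: "is_pointed X B Po Pa qo qa"
    and nat: "vertical_nat_trans X B Po Pa po pa qo qa \<alpha>"
  shows
    "fibered_functor B (slice X B Po Pa po pa) slice_proj_o slice_proj_a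
                       (slice X B Po Pa qo qa) slice_proj_o slice_proj_a
                       (sigma_o X \<alpha>) (sigma_a X \<alpha>)
     \<and> (\<exists>Fo Fa.
          (\<forall>s\<in>Ob (slice X B Po Pa qo qa).
              \<exists>x' f. Fo s = (fst s, x') \<and>
                     is_pullback (fiber X B Po Pa (fst s)) (snd s) (\<alpha> (fst s)) f x') \<and>
          fibered_functor B (slice X B Po Pa qo qa) slice_proj_o slice_proj_a
                            (slice X B Po Pa po pa) slice_proj_o slice_proj_a Fo Fa \<and>
          fibered_adjunction B (slice X B Po Pa po pa) slice_proj_o slice_proj_a
                               (slice X B Po Pa qo qa) slice_proj_o slice_proj_a
                               (sigma_o X \<alpha>) (sigma_a X \<alpha>) Fo Fa)"
proof -
  interpret M: main X B Po Pa po pa qo qa \<alpha>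
    by (intro main.intro ptd.intro fibctx.intro ptd_axioms.intro main_axioms.intro fib fpb pp pq nat)
  show ?thesis by (rule M.main_result)
qed


end
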